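(* The wreath product $\mathbb{Z}_2 \wr \mathbb{F}_2$ is Cayley $2$-tape linear-time computable.
   Context: $\mathbb{F}_2$ is the free group of rank $2$ and $\mathbb{Z}_2 \wr \mathbb{F}_2$ is the restricted wreath product (lamplighter group over $\mathbb{F}_2$). For $k>1$, a $k$-tape Turing machine has $k$ semi-infinite tapes, each with the unmodifiable symbol $\boxplus$ in its leftmost cell (occurring only there); $\boxdot$ is the blank symbol. A function $f : \Sigma^* \to \Sigma^*$ is computed on a $k$-tape Turing machine in linear time if there is such a machine and a constant $C>0$ such that for every input $x \in \Sigma^*$ of length $n$, started with first tape $\boxplus x \boxdot^\infty$, the other tapes $\boxplus \boxdot^\infty$, all heads on $\boxplus$, the machine halts in an accepting state in at most $Cn$ steps with the first tape having prefix $\boxplus f(x) \boxdot$. A finitely generated group $G$ with finite set of semigroup generators $S$ is Cayley $k$-tape linear-time computable if there exist a finite alphabet $\Sigma$, a language $L \subseteq \Sigma^*$, a bijection $\psi : L \to G$ and, for each $s \in S$, a function $f_s : \Sigma^* \to \Sigma^*$ computed on a $k$-tape Turing machine in linear time such that $\psi(f_s(w)) = \psi(w)s$ for all $w \in L$ (independent of the choice of $S$). *)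

theory Defs
  imports "HOL-Algebra.Group"
begin

datatype tsym = LeftEnd | Blank | Sym nat

datatype move = MoveL | MoveS | MoveR

text \<open>The machine halts when the
  transition function is undefined.\<close>
record tm =
  tm_states :: "nat set"
  tm_alpha :: "nat set"
  tm_start :: nat
  tm_accept :: "nat set"
  tm_delta :: "nat \<Rightarrow> tsym list \<Rightarrow> (nat \<times> tsym list \<times> move list) option"

definition tape_syms :: "nat set \<Rightarrow> tsym set" where
  "tape_syms A = {LeftEnd, Blank} \<union> Sym ` A"

definition valid_tm :: "nat \<Rightarrow> tm \<Rightarrow> bool" where
  "valid_tm k M \<longleftrightarrow>
     finite (tm_states M) \<and> finite (tm_alpha M) \<and>
     tm_start M \<in> tm_states M \<and> tm_accept M \<subseteq> tm_states M \<and>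
     (\<forall>q r. tm_delta M q r \<noteq> None \<longrightarrow>
        q \<in> tm_states M \<and> length r = k \<and> set r \<subseteq> tape_syms (tm_alpha M)) \<and>
     (\<forall>q r q' ws ms. tm_delta M q r = Some (q', ws, ms) \<longrightarrow>
        q' \<in> tm_states M \<and> length ws = k \<and> length ms = k \<and>
        set ws \<subseteq> tape_syms (tm_alpha M) \<and>
        (\<forall>i<k. (r ! i = LeftEnd \<longleftrightarrow> ws ! i = LeftEnd) \<and>
               (r ! i = LeftEnd \<longrightarrow> ms ! i \<noteq> MoveL)))"

text \<open>Configurations: state, tapes (tape i, cell j), head positions.\<close>
type_synonym tm_config = "nat \<times> (nat \<Rightarrow> nat \<Rightarrow> tsym) \<times> (nat \<Rightarrow> nat)"

fun do_move :: "move \<Rightarrow> nat \<Rightarrow> nat" where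
  "do_move MoveL h = h - 1"
| "do_move MoveS h = h"
| "do_move MoveR h = Suc h"

fun tm_step :: "nat \<Rightarrow> tm \<Rightarrow> tm_config \<Rightarrow> tm_config option" where
  "tm_step k M (q, T, H) =
     (case tm_delta M q (map (\<lambda>i. T i (H i)) [0..<k]) of
        None \<Rightarrow> None
      | Some (q', ws, ms) \<Rightarrow>
          Some (q',
                \<lambda>i. if i < k then (T i)(H i := ws ! i) else T i,
                \<lambda>i. if i < k then do_move (ms ! i) (H i) else H i))"

fun tm_steps :: "nat \<Rightarrow> tm \<Rightarrow> nat \<Rightarrow> tm_config \<Rightarrow> tm_config option" where
  "tm_steps k M 0 c = Some c"
| "tm_steps k M (Suc n) c = Option.bind (tm_steps k M n c) (tm_step k M)"

definition init_config :: "tm \<Rightarrow> nat list \<Rightarrow> tm_config" where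
  "init_config M x =
     (tm_start M,
      \<lambda>i j. if j = 0 then LeftEnd
            else if i = 0 \<and> j \<le> length x then Sym (x ! (j - 1)) else Blank,
      \<lambda>i. 0)"

definition has_output :: "(nat \<Rightarrow> tsym) \<Rightarrow> nat list \<Rightarrow> bool" where
  "has_output tp y \<longleftrightarrow>
     tp 0 = LeftEnd \<and> (\<forall>j<length y. tp (Suc j) = Sym (y ! j)) \<and>
     tp (Suc (length y)) = Blank"

definition lin_time_computable :: "nat \<Rightarrow> nat set \<Rightarrow> (nat list \<Rightarrow> nat list) \<Rightarrow> bool" where
  "lin_time_computable k \<Sigma> f \<longleftrightarrow>
     (\<forall>x \<in> lists \<Sigma>. f x \<in> lists \<Sigma>) \<and>
     (\<exists>M (C::nat). valid_tm k M \<and> \<Sigma> \<subseteq> tm_alpha M \<and> C > 0 \<and>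
        (\<forall>x \<in> lists \<Sigma>. \<exists>t c.
            t \<le> C * (length x + 1) \<and>
            tm_steps k M t (init_config M x) = Some c \<and>
            tm_step k M c = None \<and>
            fst c \<in> tm_accept M \<and>
            has_output (fst (snd c) 0) (f x)))"

definition cayley_lin_computable ::
  "nat \<Rightarrow> ('g, 'b) monoid_scheme \<Rightarrow> 'g set \<Rightarrow> bool" where
  "cayley_lin_computable k G S \<longleftrightarrow>
     (\<exists>(\<Sigma>::nat set) L (\<psi>::nat list \<Rightarrow> 'g) (f::'g \<Rightarrow> nat list \<Rightarrow> nat list).
        finite \<Sigma> \<and> L \<subseteq> lists \<Sigma> \<and> bij_betw \<psi> L (carrier G) \<and>
        (\<forall>s \<in> S. lin_time_computable k \<Sigma> (f s) \<and>
           (\<forall>w \<in> L. f s w \<in> L \<and> \<psi> (f s w) = \<psi> w \<otimes>\<^bsub>G\<^esub> s)))"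

text \<open>Letters: (generator, inverted?) with generator False = a, True = b.
  Elements of F_2 are freely reduced words.\<close>
type_synonym f2_letter = "bool \<times> bool"

definition inv_letter :: "f2_letter \<Rightarrow> f2_letter" where
  "inv_letter x = (fst x, \<not> snd x)"

definition f2_reduced :: "f2_letter list \<Rightarrow> bool" where
  "f2_reduced w \<longleftrightarrow> (\<forall>i. Suc i < length w \<longrightarrow> w ! Suc i \<noteq> inv_letter (w ! i))"

definition f2_mult_letter :: "f2_letter list \<Rightarrow> f2_letter \<Rightarrow> f2_letter list" where
  "f2_mult_letter w x = (if w \<noteq> [] \<and> last w = inv_letter x then butlast w else w @ [x])"

definition f2_mult :: "f2_letter list \<Rightarrow> f2_letter list \<Rightarrow> f2_letter list" where
  "f2_mult u v = foldl f2_mult_letter u v"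

definition F2 :: "f2_letter list monoid" where
  "F2 = \<lparr>carrier = {w. f2_reduced w}, mult = f2_mult, one = []\<rparr>"

text \<open>Restricted wreath product: an element is a finitely supported lamp
  configuration F_2 -> Z_2 (a finite set of lit positions) and a position.
  (f, g) (f', g') = (f + g.f', g g').\<close>
definition lamp_F2 :: "(f2_letter list set \<times> f2_letter list) monoid" where
  "lamp_F2 = \<lparr>carrier = {(f, g). finite f \<and> f \<subseteq> carrier F2 \<and> g \<in> carrier F2},
              mult = (\<lambda>(f, g) (f', g').
                        ((f - (f2_mult g ` f')) \<union> ((f2_mult g ` f') - f), f2_mult g g')),
              one = ({}, [])\<rparr>"

text \<open>Standard finite set of semigroup generators: a, a^-1, b, b^-1 and the
  lamp toggle at the identity.\<close>
definition lamp_F2_gens :: "(f2_letter list set \<times> f2_letter list) set" where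
  "lamp_F2_gens = {({}, [x]) | x. True} \<union> {({[]}, [])}"

end

theory Submission
  imports Defs "HOL-Library.Countable" "HOL-Library.List_Lexorder"
begin

type_synonym ctrl = "nat \<times> nat \<times> nat \<times> nat list"
type_synonym trans = "(nat \<Rightarrow> nat \<Rightarrow> nat \<times> nat list) \<times> (nat \<Rightarrow> nat list)"

fun st :: "(nat \<Rightarrow> nat \<Rightarrow> nat \<times> nat list) \<Rightarrow> nat \<Rightarrow> nat list \<Rightarrow> nat" where
  "st d q [] = q"
| "st d q (a#w) = st d (fst (d q a)) w"

fun outs :: "(nat \<Rightarrow> nat \<Rightarrow> nat \<times> nat list) \<Rightarrow> nat \<Rightarrow> nat list \<Rightarrow> nat list" where
  "outs d q [] = []"
| "outs d q (a#w) = snd (d q a) @ outs d (fst (d q a)) w"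

definition run :: "trans \<Rightarrow> nat list \<Rightarrow> nat list" where
  "run T w = outs (fst T) 0 w @ snd T (st (fst T) 0 w)"

definition rawd :: "trans list \<Rightarrow> ctrl \<Rightarrow> tsym \<Rightarrow> tsym \<Rightarrow> (ctrl \<times> tsym \<times> tsym \<times> move \<times> move) option" where
 "rawd ts c r0 r1 = (case c of (k,i,q,ps) \<Rightarrow>
   if k = 0 then Some ((1,0,0,[]), r0, r1, MoveR, MoveR)
   else if k = 1 then (case ps of p#ps' \<Rightarrow> Some ((1,i,q,ps'), r0, Sym p, MoveS, MoveR)
        | [] \<Rightarrow> (case r0 of Sym a \<Rightarrow> Some ((1,i,fst (fst (ts!i) q a), snd (fst (ts!i) q a)), r0, r1, MoveR, MoveS)
                | Blank \<Rightarrow> Some ((2,i,q,snd (ts!i) q), r0, r1, MoveS, MoveS)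
                | LeftEnd \<Rightarrow> None))
   else if k = 2 then (case ps of p#ps' \<Rightarrow> Some ((2,i,q,ps'), r0, Sym p, MoveS, MoveR)
        | [] \<Rightarrow> if Suc i < length ts then Some ((3,Suc i,0,[]), r0, r1, MoveL, MoveS)
               else Some ((4,i,0,[]), r0, r1, MoveL, MoveS))
   else if k = 3 then (if r0 = LeftEnd then Some ((1,i,0,[]), r0, r1, MoveR, MoveS)
                       else Some ((3,i,0,[]), r0, r1, MoveL, MoveS))
   else if k = 4 then (if r0 = LeftEnd then Some ((5,i,0,[]), r0, r1, MoveR, MoveS)
                       else Some ((4,i,0,[]), r0, r1, MoveL, MoveS))
   else if k = 5 then (if r1 = LeftEnd then Some ((6,i,0,[]), r0, r1, MoveS, MoveR)
                       else Some ((5,i,0,[]), r0, r1, MoveS, MoveL))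
   else if k = 6 then (case r1 of Sym a \<Rightarrow> Some ((6,i,0,[]), Sym a, r1, MoveR, MoveR)
        | Blank \<Rightarrow> Some ((7,i,0,[]), Blank, r1, MoveS, MoveS) | LeftEnd \<Rightarrow> None)
   else None)"

definition Ctrl :: "trans list \<Rightarrow> nat set \<Rightarrow> nat \<Rightarrow> nat \<Rightarrow> ctrl set" where
  "Ctrl ts S N K = {(k,i,q,ps). k \<le> 7 \<and> i < length ts \<and> q < N \<and> set ps \<subseteq> S \<and> length ps \<le> K}"

definition okw :: "tsym \<Rightarrow> tsym \<Rightarrow> move \<Rightarrow> bool" where
  "okw r w m \<longleftrightarrow> (r = LeftEnd \<longleftrightarrow> w = LeftEnd) \<and> (r = LeftEnd \<longrightarrow> m \<noteq> MoveL)"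

definition dl :: "trans list \<Rightarrow> nat set \<Rightarrow> nat \<Rightarrow> nat \<Rightarrow> nat \<Rightarrow> tsym list \<Rightarrow> (nat \<times> tsym list \<times> move list) option" where
  "dl ts S N K q r = (if q \<in> to_nat ` Ctrl ts S N K \<and> length r = 2 \<and> set r \<subseteq> tape_syms S then
     (case rawd ts (from_nat q) (r!0) (r!1) of None \<Rightarrow> None
      | Some (c', w0, w1, m0, m1) \<Rightarrow>
         if c' \<in> Ctrl ts S N K \<and> w0 \<in> tape_syms S \<and> w1 \<in> tape_syms S \<and> okw (r!0) w0 m0 \<and> okw (r!1) w1 m1
         then Some (to_nat c', [w0,w1], [m0,m1]) else None)
     else None)"

definition mach :: "trans list \<Rightarrow> nat set \<Rightarrow> nat \<Rightarrow> nat \<Rightarrow> tm" where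
  "mach ts S N K = \<lparr> tm_states = to_nat ` Ctrl ts S N K, tm_alpha = S,
     tm_start = to_nat ((0::nat),(0::nat),(0::nat),([]::nat list)),
     tm_accept = to_nat ` {c \<in> Ctrl ts S N K. fst c = 7},
     tm_delta = dl ts S N K \<rparr>"

lemma finite_Ctrl: assumes "finite S" shows "finite (Ctrl ts S N K)"
proof -
  have "Ctrl ts S N K \<subseteq> {..7} \<times> {..<length ts} \<times> {..<N} \<times> {xs. set xs \<subseteq> S \<and> length xs \<le> K}"
    by (auto simp: Ctrl_def)
  moreover have "finite ({..7::nat} \<times> {..<length ts} \<times> {..<N} \<times> {xs. set xs \<subseteq> S \<and> length xs \<le> K})"
    using finite_lists_length_le[OF assms] by blast
  ultimately show ?thesis by (rule finite_subset)
qed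

lemma valid_mach:
  assumes "finite S" "ts \<noteq> []" "0 < N"
  shows "valid_tm 2 (mach ts S N K)"
proof -
  have start: "((0::nat),(0::nat),(0::nat),([]::nat list)) \<in> Ctrl ts S N K"
    using assms by (auto simp: Ctrl_def)
  have "\<forall>i<(2::nat). P i" if "P 0" "P 1" for P using that by (auto simp: less_2_cases_iff)
  show ?thesis
    unfolding valid_tm_def mach_def
    apply (simp add: finite_Ctrl assms start)
    apply (intro conjI allI impI)
    subgoal by auto
    subgoal by (auto simp: dl_def split: if_splits)
    subgoal by (auto simp: dl_def split: if_splits)
    subgoal by (auto simp: dl_def split: if_splits)
    subgoal for q r q' ws ms
      by (auto simp: dl_def okw_def less_2_cases_iff split: if_splits option.splits)
    subgoal for q r q' ws ms
      by (auto simp: dl_def okw_def less_2_cases_iff split: if_splits option.splits)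
    subgoal for q r q' ws ms
      by (auto simp: dl_def okw_def less_2_cases_iff split: if_splits option.splits)
    subgoal for q r q' ws ms
      by (auto simp: dl_def okw_def less_2_cases_iff split: if_splits option.splits)
    subgoal for q r q' ws ms
      by (auto simp: dl_def okw_def less_2_cases_iff split: if_splits option.splits)
    subgoal for q r q' ws ms
      by (auto simp: dl_def okw_def less_2_cases_iff split: if_splits option.splits)
    done
qed

lemma tm_steps_add: "tm_steps k M (m + n) c = Option.bind (tm_steps k M m c) (tm_steps k M n)"
  by (induction n) (auto simp: bind_assoc)

lemma tm_steps_comp: "tm_steps k M a c = Some c1 \<Longrightarrow> tm_steps k M b c1 = Some c2 \<Longrightarrow> tm_steps k M (a + b) c = Some c2"
  by (simp add: tm_steps_add)

lemma tm_steps_one: "tm_step k M c = Some c1 \<Longrightarrow> tm_steps k M (Suc 0) c = Some c1"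
  by simp

definition tp :: "nat list \<Rightarrow> nat \<Rightarrow> tsym" where
  "tp x j = (if j = 0 then LeftEnd else if j \<le> length x then Sym (x!(j-1)) else Blank)"

lemma tp_snoc: "(tp out)(Suc (length out) := Sym p) = tp (out@[p])"
  by (auto simp: tp_def nth_append fun_eq_iff)

lemma tp_in: assumes "set x \<subseteq> S" shows "tp x j \<in> tape_syms S"
proof -
  have "j \<le> length x \<Longrightarrow> 0 < j \<Longrightarrow> x ! (j - 1) \<in> S" using assms nth_mem[of "j - 1" x] by auto
  then show ?thesis by (auto simp: tp_def tape_syms_def)
qed

lemma tp_Suc_LeftEnd[simp]: "tp x (Suc j) \<noteq> LeftEnd"
  by (auto simp: tp_def)

lemma tp_pos: "0 < j \<Longrightarrow> tp x j \<noteq> LeftEnd"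
  by (auto simp: tp_def)

lemma tp_0[simp]: "tp x 0 = LeftEnd" by (simp add: tp_def)

lemma tp_blank[simp]: "tp x (Suc (length x)) = Blank" by (simp add: tp_def)

definition upd2 :: "(nat \<Rightarrow> nat \<Rightarrow> tsym) \<Rightarrow> (nat \<Rightarrow> nat) \<Rightarrow> tsym \<Rightarrow> tsym \<Rightarrow> nat \<Rightarrow> nat \<Rightarrow> tsym" where
  "upd2 T H w0 w1 = (\<lambda>i. if i < 2 then (T i)(H i := [w0,w1]!i) else T i)"
definition mv2 :: "(nat \<Rightarrow> nat) \<Rightarrow> move \<Rightarrow> move \<Rightarrow> nat \<Rightarrow> nat" where
  "mv2 H m0 m1 = (\<lambda>i. if i < 2 then do_move ([m0,m1]!i) (H i) else H i)"

lemma upd2_simps[simp]: "upd2 T H w0 w1 0 = (T 0)(H 0 := w0)" "upd2 T H w0 w1 (Suc 0) = (T 1)(H 1 := w1)"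
  by (auto simp: upd2_def)
lemma mv2_simps[simp]: "mv2 H m0 m1 0 = do_move m0 (H 0)" "mv2 H m0 m1 (Suc 0) = do_move m1 (H 1)"
  by (auto simp: mv2_def)

lemma step_lemma:
  assumes "c \<in> Ctrl ts S N K"
  and "rawd ts c (T 0 (H 0)) (T 1 (H 1)) = Some (c', w0, w1, m0, m1)"
  and "c' \<in> Ctrl ts S N K"
  and "T 0 (H 0) \<in> tape_syms S" "T 1 (H 1) \<in> tape_syms S"
  and "w0 \<in> tape_syms S" "w1 \<in> tape_syms S"
  and "okw (T 0 (H 0)) w0 m0" "okw (T 1 (H 1)) w1 m1"
  shows "tm_step 2 (mach ts S N K) (to_nat c, T, H) = Some (to_nat c', upd2 T H w0 w1, mv2 H m0 m1)"
proof -
  have m: "map (\<lambda>i. T i (H i)) [0..<2] = [T 0 (H 0), T 1 (H 1)]" by (simp add: upt_rec)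
  show ?thesis using assms
    by (simp add: m mach_def dl_def upd2_def mv2_def)
qed


abbreviation cn :: "ctrl \<Rightarrow> nat" where "cn c \<equiv> to_nat c"

lemma okw_same[simp]: "okw r r MoveS" "okw r r MoveR" "r \<noteq> LeftEnd \<Longrightarrow> okw r w m \<longleftrightarrow> w \<noteq> LeftEnd"
  by (auto simp: okw_def)

lemma Blank_in[simp]: "Blank \<in> tape_syms S" and LeftEnd_in[simp]: "LeftEnd \<in> tape_syms S"
  and Sym_in[simp]: "Sym a \<in> tape_syms S \<longleftrightarrow> a \<in> S"
  by (auto simp: tape_syms_def)

lemma arith_aux: "(a1::nat) \<le> b1 \<Longrightarrow> y1 \<le> p1 \<Longrightarrow> Suc 0 + (a1 + y1) + Suc (Suc y1) + Suc y1 \<le> b1 + 3 * p1 + 4 * (n1 + 1)"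
  by simp

lemma concat_in_lists: "\<forall>T\<in>set us. set (f T) \<subseteq> S \<Longrightarrow> concat (map f us) \<in> lists S"
  by (induction us) auto
lemma set_concat_sub: "\<forall>T\<in>set us. set (f T) \<subseteq> S \<Longrightarrow> set (concat (map f us)) \<subseteq> S"
  by (induction us) auto
lemma len_concat_le: "\<forall>T\<in>set us. length (f T) \<le> b \<Longrightarrow> length (concat (map f us)) \<le> length us * b"
  by (induction us) auto

context
  fixes ts :: "trans list" and S :: "nat set" and N K :: nat
  assumes finS: "finite S" and ne: "ts \<noteq> []" and Npos: "0 < N"
  and tr: "\<forall>T\<in>set ts. \<forall>q<N. \<forall>a\<in>S. fst (fst T q a) < N \<and> set (snd (fst T q a)) \<subseteq> S \<and> length (snd (fst T q a)) \<le> K"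
  and fn: "\<forall>T\<in>set ts. \<forall>q<N. set (snd T q) \<subseteq> S \<and> length (snd T q) \<le> K"
begin

lemma emit:
  assumes "(k::nat) = 1 \<or> k = 2" "i < length ts" "q < N" "set ps \<subseteq> S" "length ps \<le> K"
   "T 1 = tp out" "H 1 = Suc (length out)" "T 0 (H 0) \<in> tape_syms S"
  shows "\<exists>T' H'. tm_steps 2 (mach ts S N K) (length ps) (cn (k,i,q,ps), T, H) = Some (cn (k,i,q,[]), T', H')
     \<and> T' 0 = T 0 \<and> H' 0 = H 0 \<and> T' 1 = tp (out@ps) \<and> H' 1 = Suc (length (out@ps))"
  using assms
proof (induction ps arbitrary: out T H)
  case Nil
  then show ?case by auto
next
  case (Cons p ps)
  have c1: "(k,i,q,p#ps) \<in> Ctrl ts S N K" "(k,i,q,ps) \<in> Ctrl ts S N K"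
    using Cons.prems by (auto simp: Ctrl_def)
  have r1: "T 1 (H 1) = Blank" using Cons.prems by simp
  have rd: "rawd ts (k,i,q,p#ps) (T 0 (H 0)) (T 1 (H 1)) = Some ((k,i,q,ps), T 0 (H 0), Sym p, MoveS, MoveR)"
    using Cons.prems(1) by (auto simp: rawd_def)
  have s: "tm_step 2 (mach ts S N K) (cn (k,i,q,p#ps), T, H) = Some (cn (k,i,q,ps), upd2 T H (T 0 (H 0)) (Sym p), mv2 H MoveS MoveR)"
    apply (rule step_lemma[where T=T and H=H, OF c1(1) rd c1(2)])
    using Cons.prems r1 by (auto simp: okw_def)
  let ?T = "upd2 T H (T 0 (H 0)) (Sym p)" and ?H = "mv2 H MoveS MoveR"
  have pre: "?T 1 = tp (out@[p])" "?H 1 = Suc (length (out@[p]))" "?T 0 = T 0" "?H 0 = H 0"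
    using Cons.prems tp_snoc[of out p] by auto
  have "\<exists>T' H'. tm_steps 2 (mach ts S N K) (length ps) (cn (k,i,q,ps), ?T, ?H) = Some (cn (k,i,q,[]), T', H')
     \<and> T' 0 = ?T 0 \<and> H' 0 = ?H 0 \<and> T' 1 = tp ((out@[p])@ps) \<and> H' 1 = Suc (length ((out@[p])@ps))"
    apply (rule Cons.IH)
    using Cons.prems pre by simp_all
  then obtain T' H' where IH: "tm_steps 2 (mach ts S N K) (length ps) (cn (k,i,q,ps), ?T, ?H) = Some (cn (k,i,q,[]), T', H')"
     "T' 0 = T 0" "H' 0 = H 0" "T' 1 = tp (out@[p]@ps)" "H' 1 = Suc (length (out@[p]@ps))"
    using pre by auto
  show ?case
    apply (rule exI[of _ T'], rule exI[of _ H'])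
    using tm_steps_comp[OF tm_steps_one[OF s] IH(1)] IH(2-) by simp
qed


lemma tr_i: assumes "i < length ts" "q < N" "a \<in> S"
  shows "fst (fst (ts!i) q a) < N" "set (snd (fst (ts!i) q a)) \<subseteq> S" "length (snd (fst (ts!i) q a)) \<le> K"
  using tr assms nth_mem[OF assms(1)] by blast+

lemma fn_i: assumes "i < length ts" "q < N"
  shows "set (snd (ts!i) q) \<subseteq> S" "length (snd (ts!i) q) \<le> K"
  using fn assms nth_mem[OF assms(1)] by blast+

lemma scan:
  assumes "i < length ts" "q < N" "T 0 = tp x" "set x \<subseteq> S" "H 0 = Suc j" "drop j x = xs"
    "T 1 = tp out" "H 1 = Suc (length out)" "j \<le> length x"
  shows "\<exists>T' H'. tm_steps 2 (mach ts S N K) (length xs + length (outs (fst (ts!i)) q xs)) (cn (1,i,q,[]), T, H)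
      = Some (cn (1,i,st (fst (ts!i)) q xs,[]), T', H')
     \<and> T' 0 = tp x \<and> H' 0 = Suc (length x) \<and> T' 1 = tp (out @ outs (fst (ts!i)) q xs) \<and> H' 1 = Suc (length (out @ outs (fst (ts!i)) q xs))"
  using assms
proof (induction xs arbitrary: q j out T H)
  case Nil
  then have "length x = j" by simp
  then show ?case using Nil by auto
next
  case (Cons a xs)
  let ?d = "fst (ts!i)"
  have jx: "j < length x" using Cons.prems(6) by (metis drop_eq_Nil list.distinct(1) not_le)
  have xa: "x ! j = a" using Cons.prems(6) jx by (metis Cons_nth_drop_Suc list.inject)
  have dr: "drop (Suc j) x = xs" using Cons.prems(6) jx by (metis Cons_nth_drop_Suc list.inject)
  have jx': "Suc j \<le> length x" using jx by simp
  have aS: "a \<in> S" using Cons.prems(4) jx xa nth_mem by blast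
  have r0: "T 0 (H 0) = Sym a" using Cons.prems jx xa by (simp add: tp_def)
  have r1: "T 1 (H 1) = Blank" using Cons.prems by simp
  let ?q' = "fst (?d q a)" and ?ps = "snd (?d q a)"
  have q': "?q' < N" "set ?ps \<subseteq> S" "length ?ps \<le> K" using tr_i[OF Cons.prems(1,2) aS] by auto
  have c1: "(1,i,q,[]) \<in> Ctrl ts S N K" "(1,i,?q',?ps) \<in> Ctrl ts S N K"
    using Cons.prems q' by (auto simp: Ctrl_def case_prod_beta)
  have rd: "rawd ts (1,i,q,[]) (T 0 (H 0)) (T 1 (H 1)) = Some ((1,i,?q',?ps), Sym a, Blank, MoveR, MoveS)"
    using r0 r1 by (simp add: rawd_def)
  have s: "tm_step 2 (mach ts S N K) (cn (1,i,q,[]), T, H) = Some (cn (1,i,?q',?ps), upd2 T H (Sym a) Blank, mv2 H MoveR MoveS)"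
    apply (rule step_lemma[where T=T and H=H, OF c1(1) rd c1(2)])
    using r0 r1 aS by (auto simp: okw_def)
  let ?T = "upd2 T H (Sym a) Blank" and ?H = "mv2 H MoveR MoveS"
  have pre: "?T 0 = tp x" "?T 1 = tp out" "?H 0 = Suc (Suc j)" "?H 1 = Suc (length out)"
    using Cons.prems r0 r1 by (auto simp: fun_eq_iff)
  have "\<exists>T' H'. tm_steps 2 (mach ts S N K) (length ?ps) (cn (1,i,?q',?ps), ?T, ?H) = Some (cn (1,i,?q',[]), T', H')
     \<and> T' 0 = ?T 0 \<and> H' 0 = ?H 0 \<and> T' 1 = tp (out@?ps) \<and> H' 1 = Suc (length (out@?ps))"
    apply (rule emit)
    using Cons.prems q' pre tp_in[OF Cons.prems(4)] by simp_all
  then obtain T1 H1 where E: "tm_steps 2 (mach ts S N K) (length ?ps) (cn (1,i,?q',?ps), ?T, ?H) = Some (cn (1,i,?q',[]), T1, H1)"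
     "T1 0 = tp x" "H1 0 = Suc (Suc j)" "T1 1 = tp (out@?ps)" "H1 1 = Suc (length (out@?ps))"
    using pre by auto
  have "\<exists>T' H'. tm_steps 2 (mach ts S N K) (length xs + length (outs ?d ?q' xs)) (cn (1,i,?q',[]), T1, H1)
      = Some (cn (1,i,st ?d ?q' xs,[]), T', H')
     \<and> T' 0 = tp x \<and> H' 0 = Suc (length x) \<and> T' 1 = tp ((out@?ps) @ outs ?d ?q' xs) \<and> H' 1 = Suc (length ((out@?ps) @ outs ?d ?q' xs))"
    apply (rule Cons.IH)
    using Cons.prems(1-5,7,8) q' E dr jx' by simp_all
  then obtain T2 H2 where F: "tm_steps 2 (mach ts S N K) (length xs + length (outs ?d ?q' xs)) (cn (1,i,?q',[]), T1, H1)
      = Some (cn (1,i,st ?d ?q' xs,[]), T2, H2)"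
     "T2 0 = tp x" "H2 0 = Suc (length x)" "T2 1 = tp ((out@?ps) @ outs ?d ?q' xs)" "H2 1 = Suc (length ((out@?ps) @ outs ?d ?q' xs))"
    by blast
  have tot: "tm_steps 2 (mach ts S N K) (Suc 0 + length ?ps + (length xs + length (outs ?d ?q' xs))) (cn (1,i,q,[]), T, H)
      = Some (cn (1,i,st ?d ?q' xs,[]), T2, H2)"
    by (rule tm_steps_comp[OF tm_steps_comp[OF tm_steps_one[OF s] E(1)] F(1)])
  have eq: "Suc 0 + length ?ps + (length xs + length (outs ?d ?q' xs)) = length (a#xs) + length (outs ?d q (a#xs))"
    by simp
  show ?case
    apply (rule exI[of _ T2], rule exI[of _ H2])
    using tot F(2-) unfolding eq by simp
qed


lemma st_lt: "i < length ts \<Longrightarrow> q < N \<Longrightarrow> set w \<subseteq> S \<Longrightarrow> st (fst (ts!i)) q w < N"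
  by (induction w arbitrary: q) (auto simp: tr_i)

lemma outs_in: "i < length ts \<Longrightarrow> q < N \<Longrightarrow> set w \<subseteq> S \<Longrightarrow>
   set (outs (fst (ts!i)) q w) \<subseteq> S \<and> length (outs (fst (ts!i)) q w) \<le> K * length w"
proof (induction w arbitrary: q)
  case Nil then show ?case by simp
next
  case (Cons a w)
  have a: "a \<in> S" using Cons.prems by simp
  have IH: "set (outs (fst (ts!i)) (fst (fst (ts!i) q a)) w) \<subseteq> S \<and> length (outs (fst (ts!i)) (fst (fst (ts!i) q a)) w) \<le> K * length w"
    using tr_i[OF Cons.prems(1,2) a] Cons.IH[of "fst (fst (ts!i) q a)"] Cons.prems by auto
  then show ?case using tr_i[OF Cons.prems(1,2) a] by auto
qed

lemma run_in: assumes "i < length ts" "set w \<subseteq> S"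
  shows "set (run (ts!i) w) \<subseteq> S \<and> length (run (ts!i) w) \<le> K * (length w + 1)"
proof -
  have q: "st (fst (ts!i)) 0 w < N" using st_lt[OF assms(1) Npos assms(2)] .
  show ?thesis using outs_in[OF assms(1) Npos assms(2)] fn_i[OF assms(1) q] by (auto simp: run_def)
qed

lemma endpass:
  assumes "i < length ts" "q < N" "T 0 = tp x" "set x \<subseteq> S" "H 0 = Suc (length x)"
    "T 1 = tp out" "H 1 = Suc (length out)"
  shows "\<exists>T' H'. tm_steps 2 (mach ts S N K) (Suc (length (snd (ts!i) q)) + Suc 0) (cn (1,i,q,[]), T, H)
      = Some (cn (if Suc i < length ts then (3,Suc i,0,[]) else (4,i,0,[])), T', H')
     \<and> T' 0 = tp x \<and> H' 0 = length x \<and> T' 1 = tp (out @ snd (ts!i) q) \<and> H' 1 = Suc (length (out @ snd (ts!i) q))"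
proof -
  let ?f = "snd (ts!i) q"
  have f: "set ?f \<subseteq> S" "length ?f \<le> K" using fn_i[OF assms(1,2)] by auto
  have r: "T 0 (H 0) = Blank" "T 1 (H 1) = Blank" using assms by auto
  have c1: "(1,i,q,[]) \<in> Ctrl ts S N K" "(2,i,q,?f) \<in> Ctrl ts S N K" "(2,i,q,[]) \<in> Ctrl ts S N K"
    using assms f by (auto simp: Ctrl_def)
  have rd: "rawd ts (1,i,q,[]) (T 0 (H 0)) (T 1 (H 1)) = Some ((2,i,q,?f), Blank, Blank, MoveS, MoveS)"
    using r by (simp add: rawd_def)
  have s1: "tm_step 2 (mach ts S N K) (cn (1,i,q,[]), T, H) = Some (cn (2,i,q,?f), upd2 T H Blank Blank, mv2 H MoveS MoveS)"
    apply (rule step_lemma[where T=T and H=H, OF c1(1) rd c1(2)])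
    using r by (auto simp: okw_def)
  let ?T = "upd2 T H Blank Blank" and ?H = "mv2 H MoveS MoveS"
  have pre: "?T 0 = tp x" "?T 1 = tp out" "?H 0 = Suc (length x)" "?H 1 = Suc (length out)"
    using assms r by (auto simp: fun_eq_iff)
  have "\<exists>T' H'. tm_steps 2 (mach ts S N K) (length ?f) (cn (2,i,q,?f), ?T, ?H) = Some (cn (2,i,q,[]), T', H')
     \<and> T' 0 = ?T 0 \<and> H' 0 = ?H 0 \<and> T' 1 = tp (out@?f) \<and> H' 1 = Suc (length (out@?f))"
    apply (rule emit)
    using assms f pre by simp_all
  then obtain T1 H1 where E: "tm_steps 2 (mach ts S N K) (length ?f) (cn (2,i,q,?f), ?T, ?H) = Some (cn (2,i,q,[]), T1, H1)"
     "T1 0 = tp x" "H1 0 = Suc (length x)" "T1 1 = tp (out@?f)" "H1 1 = Suc (length (out@?f))"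
    using pre by auto
  let ?c = "if Suc i < length ts then (3,Suc i,0,[]) else (4::nat,i,0::nat,[]::nat list)"
  have r2: "T1 0 (H1 0) = Blank" "T1 1 (H1 1) = Blank" using E by (auto simp: tp_def)
  have c2: "?c \<in> Ctrl ts S N K" using assms Npos by (auto simp: Ctrl_def)
  have rd2: "rawd ts (2,i,q,[]) (T1 0 (H1 0)) (T1 1 (H1 1)) = Some (?c, Blank, Blank, MoveL, MoveS)"
    using r2 by (simp add: rawd_def)
  have s2: "tm_step 2 (mach ts S N K) (cn (2,i,q,[]), T1, H1) = Some (cn ?c, upd2 T1 H1 Blank Blank, mv2 H1 MoveL MoveS)"
    apply (rule step_lemma[where T=T1 and H=H1, OF c1(3) rd2 c2])
    using r2 by (auto simp: okw_def)
  have tot: "tm_steps 2 (mach ts S N K) (Suc 0 + length ?f + Suc 0) (cn (1,i,q,[]), T, H) = Some (cn ?c, upd2 T1 H1 Blank Blank, mv2 H1 MoveL MoveS)"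
    by (rule tm_steps_comp[OF tm_steps_comp[OF tm_steps_one[OF s1] E(1)] tm_steps_one[OF s2]])
  show ?thesis
    apply (rule exI[of _ "upd2 T1 H1 Blank Blank"], rule exI[of _ "mv2 H1 MoveL MoveS"])
    using tot E(2-) r2 by (auto simp: fun_eq_iff)
qed

lemma rew0:
  assumes "(k::nat) = 3 \<or> k = 4" "i < length ts" "T 0 = tp x" "set x \<subseteq> S" "H 0 = j" "j \<le> length x"
    "T 1 (H 1) \<in> tape_syms S"
  shows "\<exists>T' H'. tm_steps 2 (mach ts S N K) (Suc j) (cn (k,i,0,[]), T, H)
      = Some (cn (if k = 3 then 1 else 5, i, 0, []), T', H') \<and> T' 0 = tp x \<and> H' 0 = 1 \<and> T' 1 = T 1 \<and> H' 1 = H 1"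
  using assms
proof (induction j arbitrary: T H)
  case 0
  let ?c = "(if k = 3 then 1 else 5, i, 0::nat, []::nat list)"
  have r: "T 0 (H 0) = LeftEnd" using 0 by simp
  have c: "(k,i,0,[]) \<in> Ctrl ts S N K" "?c \<in> Ctrl ts S N K" using 0 Npos by (auto simp: Ctrl_def)
  have rd: "rawd ts (k,i,0,[]) (T 0 (H 0)) (T 1 (H 1)) = Some (?c, LeftEnd, T 1 (H 1), MoveR, MoveS)"
    using r 0(1) by (auto simp: rawd_def)
  have s: "tm_step 2 (mach ts S N K) (cn (k,i,0,[]), T, H) = Some (cn ?c, upd2 T H LeftEnd (T 1 (H 1)), mv2 H MoveR MoveS)"
    apply (rule step_lemma[where T=T and H=H, OF c(1) rd c(2)])
    using r 0 by (auto simp: okw_def)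
  show ?case
    apply (rule exI[of _ "upd2 T H LeftEnd (T 1 (H 1))"], rule exI[of _ "mv2 H MoveR MoveS"])
    using tm_steps_one[OF s] 0 r by (auto simp: fun_eq_iff)
next
  case (Suc j)
  have r: "T 0 (H 0) = Sym (x!j)" using Suc.prems by (simp add: tp_def)
  have xj: "x!j \<in> S" using Suc.prems nth_mem[of j x] by auto
  have c: "(k,i,0,[]) \<in> Ctrl ts S N K" using Suc.prems Npos by (auto simp: Ctrl_def)
  have rd: "rawd ts (k,i,0,[]) (T 0 (H 0)) (T 1 (H 1)) = Some ((k,i,0,[]), T 0 (H 0), T 1 (H 1), MoveL, MoveS)"
    using r Suc.prems(1) by (auto simp: rawd_def)
  have s: "tm_step 2 (mach ts S N K) (cn (k,i,0,[]), T, H) = Some (cn (k,i,0,[]), upd2 T H (T 0 (H 0)) (T 1 (H 1)), mv2 H MoveL MoveS)"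
    apply (rule step_lemma[where T=T and H=H, OF c rd c])
    using r Suc.prems xj by (auto simp: okw_def)
  let ?T = "upd2 T H (T 0 (H 0)) (T 1 (H 1))" and ?H = "mv2 H MoveL MoveS"
  have pre: "?T 0 = tp x" "?T 1 = T 1" "?H 0 = j" "?H 1 = H 1" using Suc.prems by auto
  have "\<exists>T' H'. tm_steps 2 (mach ts S N K) (Suc j) (cn (k,i,0,[]), ?T, ?H)
      = Some (cn (if k = 3 then 1 else 5, i, 0, []), T', H') \<and> T' 0 = tp x \<and> H' 0 = 1 \<and> T' 1 = ?T 1 \<and> H' 1 = ?H 1"
    apply (rule Suc.IH) using Suc.prems pre by simp_all
  then obtain T' H' where I: "tm_steps 2 (mach ts S N K) (Suc j) (cn (k,i,0,[]), ?T, ?H)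
      = Some (cn (if k = 3 then 1 else 5, i, 0, []), T', H')" "T' 0 = tp x" "H' 0 = 1" "T' 1 = T 1" "H' 1 = H 1"
    using pre by auto
  show ?case
    apply (rule exI[of _ T'], rule exI[of _ H'])
    using tm_steps_comp[OF tm_steps_one[OF s] I(1)] I(2-) by simp
qed


lemma pass:
  assumes "i < length ts" "T 0 = tp x" "set x \<subseteq> S" "H 0 = 1" "T 1 = tp out" "H 1 = Suc (length out)"
  shows "\<exists>T' H'. tm_steps 2 (mach ts S N K) (2 * length x + length (run (ts!i) x) + 3) (cn (1,i,0,[]), T, H)
      = Some (cn (if Suc i < length ts then (1,Suc i,0,[]) else (5,i,0,[])), T', H')
     \<and> T' 0 = tp x \<and> H' 0 = 1 \<and> T' 1 = tp (out @ run (ts!i) x) \<and> H' 1 = Suc (length (out @ run (ts!i) x))"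
proof -
  let ?d = "fst (ts!i)"
  have "\<exists>T' H'. tm_steps 2 (mach ts S N K) (length x + length (outs ?d 0 x)) (cn (1,i,0,[]), T, H)
      = Some (cn (1,i,st ?d 0 x,[]), T', H')
     \<and> T' 0 = tp x \<and> H' 0 = Suc (length x) \<and> T' 1 = tp (out @ outs ?d 0 x) \<and> H' 1 = Suc (length (out @ outs ?d 0 x))"
    by (rule scan[where j=0]) (use assms Npos in simp_all)
  then obtain T1 H1 where A: "tm_steps 2 (mach ts S N K) (length x + length (outs ?d 0 x)) (cn (1,i,0,[]), T, H)
      = Some (cn (1,i,st ?d 0 x,[]), T1, H1)"
     "T1 0 = tp x" "H1 0 = Suc (length x)" "T1 1 = tp (out @ outs ?d 0 x)" "H1 1 = Suc (length (out @ outs ?d 0 x))"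
    by blast
  let ?q = "st ?d 0 x"
  have q: "?q < N" using st_lt[OF assms(1) Npos assms(3)] .
  have "\<exists>T' H'. tm_steps 2 (mach ts S N K) (Suc (length (snd (ts!i) ?q)) + Suc 0) (cn (1,i,?q,[]), T1, H1)
      = Some (cn (if Suc i < length ts then (3,Suc i,0,[]) else (4,i,0,[])), T', H')
     \<and> T' 0 = tp x \<and> H' 0 = length x \<and> T' 1 = tp ((out @ outs ?d 0 x) @ snd (ts!i) ?q) \<and> H' 1 = Suc (length ((out @ outs ?d 0 x) @ snd (ts!i) ?q))"
    by (rule endpass) (use assms q A in simp_all)
  then obtain T2 H2 where B: "tm_steps 2 (mach ts S N K) (Suc (length (snd (ts!i) ?q)) + Suc 0) (cn (1,i,?q,[]), T1, H1)
      = Some (cn (if Suc i < length ts then (3,Suc i,0,[]) else (4,i,0,[])), T2, H2)"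
     "T2 0 = tp x" "H2 0 = length x" "T2 1 = tp (out @ run (ts!i) x)" "H2 1 = Suc (length (out @ run (ts!i) x))"
    by (auto simp: run_def)
  have r1: "T2 1 (H2 1) \<in> tape_syms S"
  proof -
    have "set (run (ts!i) x) \<subseteq> S" using run_in[OF assms(1,3)] by simp
    moreover have "set out \<subseteq> S \<or> True" by simp
    ultimately show ?thesis using B by (simp add: tp_def)
  qed
  show ?thesis
  proof (cases "Suc i < length ts")
    case True
    have "\<exists>T' H'. tm_steps 2 (mach ts S N K) (Suc (length x)) (cn (3,Suc i,0,[]), T2, H2)
      = Some (cn (if (3::nat) = 3 then 1 else 5, Suc i, 0, []), T', H') \<and> T' 0 = tp x \<and> H' 0 = 1 \<and> T' 1 = T2 1 \<and> H' 1 = H2 1"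
      by (rule rew0) (use assms True B r1 in simp_all)
    then obtain T3 H3 where C: "tm_steps 2 (mach ts S N K) (Suc (length x)) (cn (3,Suc i,0,[]), T2, H2)
      = Some (cn (1, Suc i, 0, []), T3, H3)" "T3 0 = tp x" "H3 0 = 1" "T3 1 = T2 1" "H3 1 = H2 1" by auto
    have tot: "tm_steps 2 (mach ts S N K) ((length x + length (outs ?d 0 x)) + (Suc (length (snd (ts!i) ?q)) + Suc 0) + Suc (length x)) (cn (1,i,0,[]), T, H)
      = Some (cn (1, Suc i, 0, []), T3, H3)"
    proof -
      have B1: "tm_steps 2 (mach ts S N K) (Suc (length (snd (ts!i) ?q)) + Suc 0) (cn (1,i,?q,[]), T1, H1)
        = Some (cn (3,Suc i,0,[]), T2, H2)" using B(1) True by simp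
      show ?thesis by (rule tm_steps_comp[OF tm_steps_comp[OF A(1) B1] C(1)])
    qed
    have eq: "(length x + length (outs ?d 0 x)) + (Suc (length (snd (ts!i) ?q)) + Suc 0) + Suc (length x) = 2 * length x + length (run (ts!i) x) + 3"
      by (simp add: run_def)
    show ?thesis
      apply (rule exI[of _ T3], rule exI[of _ H3])
      using tot C(2-) B(4,5) True unfolding eq by simp
  next
    case False
    have "\<exists>T' H'. tm_steps 2 (mach ts S N K) (Suc (length x)) (cn (4,i,0,[]), T2, H2)
      = Some (cn (if (4::nat) = 3 then 1 else 5, i, 0, []), T', H') \<and> T' 0 = tp x \<and> H' 0 = 1 \<and> T' 1 = T2 1 \<and> H' 1 = H2 1"
      by (rule rew0) (use assms B r1 in simp_all)
    then obtain T3 H3 where C: "tm_steps 2 (mach ts S N K) (Suc (length x)) (cn (4,i,0,[]), T2, H2)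
      = Some (cn (5, i, 0, []), T3, H3)" "T3 0 = tp x" "H3 0 = 1" "T3 1 = T2 1" "H3 1 = H2 1" by auto
    have tot: "tm_steps 2 (mach ts S N K) ((length x + length (outs ?d 0 x)) + (Suc (length (snd (ts!i) ?q)) + Suc 0) + Suc (length x)) (cn (1,i,0,[]), T, H)
      = Some (cn (5, i, 0, []), T3, H3)"
    proof -
      have B1: "tm_steps 2 (mach ts S N K) (Suc (length (snd (ts!i) ?q)) + Suc 0) (cn (1,i,?q,[]), T1, H1)
        = Some (cn (4,i,0,[]), T2, H2)" using B(1) False by simp
      show ?thesis by (rule tm_steps_comp[OF tm_steps_comp[OF A(1) B1] C(1)])
    qed
    have eq: "(length x + length (outs ?d 0 x)) + (Suc (length (snd (ts!i) ?q)) + Suc 0) + Suc (length x) = 2 * length x + length (run (ts!i) x) + 3"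
      by (simp add: run_def)
    show ?thesis
      apply (rule exI[of _ T3], rule exI[of _ H3])
      using tot C(2-) B(4,5) False unfolding eq by simp
  qed
qed


lemma passes:
  assumes "i < length ts" "T 0 = tp x" "set x \<subseteq> S" "H 0 = 1" "T 1 = tp out" "H 1 = Suc (length out)"
  shows "\<exists>T' H'. tm_steps 2 (mach ts S N K) ((length ts - i) * (2 * length x + 3) + length (concat (map (\<lambda>T. run T x) (drop i ts)))) (cn (1,i,0,[]), T, H)
      = Some (cn (5, length ts - 1, 0, []), T', H')
     \<and> T' 0 = tp x \<and> H' 0 = 1 \<and> T' 1 = tp (out @ concat (map (\<lambda>T. run T x) (drop i ts)))
     \<and> H' 1 = Suc (length (out @ concat (map (\<lambda>T. run T x) (drop i ts))))"
  using assms
proof (induction "length ts - i" arbitrary: i out T H)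
  case 0
  then show ?case by simp
next
  case (Suc n)
  have dr: "drop i ts = ts!i # drop (Suc i) ts" using Suc.prems(1) by (simp add: Cons_nth_drop_Suc)
  obtain T1 H1 where A: "tm_steps 2 (mach ts S N K) (2 * length x + length (run (ts!i) x) + 3) (cn (1,i,0,[]), T, H)
      = Some (cn (if Suc i < length ts then (1,Suc i,0,[]) else (5,i,0,[])), T1, H1)"
     "T1 0 = tp x" "H1 0 = 1" "T1 1 = tp (out @ run (ts!i) x)" "H1 1 = Suc (length (out @ run (ts!i) x))"
    using pass[OF Suc.prems] by blast
  show ?case
  proof (cases "Suc i < length ts")
    case True
    have A1: "tm_steps 2 (mach ts S N K) (2 * length x + length (run (ts!i) x) + 3) (cn (1,i,0,[]), T, H)
      = Some (cn (1,Suc i,0,[]), T1, H1)" using A(1) True by simp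
    have "\<exists>T' H'. tm_steps 2 (mach ts S N K) ((length ts - Suc i) * (2 * length x + 3) + length (concat (map (\<lambda>T. run T x) (drop (Suc i) ts)))) (cn (1,Suc i,0,[]), T1, H1)
      = Some (cn (5, length ts - 1, 0, []), T', H')
     \<and> T' 0 = tp x \<and> H' 0 = 1 \<and> T' 1 = tp ((out @ run (ts!i) x) @ concat (map (\<lambda>T. run T x) (drop (Suc i) ts)))
     \<and> H' 1 = Suc (length ((out @ run (ts!i) x) @ concat (map (\<lambda>T. run T x) (drop (Suc i) ts))))"
      apply (rule Suc.hyps(1))
      using Suc.hyps(2) True A Suc.prems by simp_all
    then obtain T2 H2 where B: "tm_steps 2 (mach ts S N K) ((length ts - Suc i) * (2 * length x + 3) + length (concat (map (\<lambda>T. run T x) (drop (Suc i) ts)))) (cn (1,Suc i,0,[]), T1, H1)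
      = Some (cn (5, length ts - 1, 0, []), T2, H2)"
     "T2 0 = tp x" "H2 0 = 1" "T2 1 = tp ((out @ run (ts!i) x) @ concat (map (\<lambda>T. run T x) (drop (Suc i) ts)))"
     "H2 1 = Suc (length ((out @ run (ts!i) x) @ concat (map (\<lambda>T. run T x) (drop (Suc i) ts))))" by blast
    have eq: "(2 * length x + length (run (ts!i) x) + 3) + ((length ts - Suc i) * (2 * length x + 3) + length (concat (map (\<lambda>T. run T x) (drop (Suc i) ts))))
       = (length ts - i) * (2 * length x + 3) + length (concat (map (\<lambda>T. run T x) (drop i ts)))"
    proof -
      have "length ts - i = Suc (length ts - Suc i)" using Suc.prems(1) by simp
      then show ?thesis unfolding dr by simp
    qed
    show ?thesis
      apply (rule exI[of _ T2], rule exI[of _ H2])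
      using tm_steps_comp[OF A1 B(1)] B(2-) unfolding eq dr by simp
  next
    case False
    have i: "i = length ts - 1" "drop (Suc i) ts = []" using False Suc.prems(1) by auto
    have A1: "tm_steps 2 (mach ts S N K) (2 * length x + length (run (ts!i) x) + 3) (cn (1,i,0,[]), T, H)
      = Some (cn (5, length ts - 1, 0, []), T1, H1)" using A(1) False i by simp
    have eq: "(length ts - i) * (2 * length x + 3) + length (concat (map (\<lambda>T. run T x) (drop i ts))) = 2 * length x + length (run (ts!i) x) + 3"
    proof -
      have "length ts - i = 1" using False Suc.prems(1) by simp
      then show ?thesis unfolding dr i(2) by simp
    qed
    show ?thesis
      apply (rule exI[of _ T1], rule exI[of _ H1])
      unfolding eq using A1 A(2-) by (simp add: dr i(2))
  qed
qed

lemma rew1: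
  assumes "i < length ts" "T 1 = tp y" "set y \<subseteq> S" "H 1 = j" "j \<le> Suc (length y)" "T 0 (H 0) \<in> tape_syms S"
  shows "\<exists>T' H'. tm_steps 2 (mach ts S N K) (Suc j) (cn (5,i,0,[]), T, H)
      = Some (cn (6, i, 0, []), T', H') \<and> T' 0 = T 0 \<and> H' 0 = H 0 \<and> T' 1 = tp y \<and> H' 1 = 1"
  using assms
proof (induction j arbitrary: T H)
  case 0
  have r: "T 1 (H 1) = LeftEnd" using 0 by simp
  have c: "(5::nat,i,0::nat,[]::nat list) \<in> Ctrl ts S N K" "(6::nat,i,0::nat,[]::nat list) \<in> Ctrl ts S N K" using 0 Npos by (auto simp: Ctrl_def)
  have rd: "rawd ts (5,i,0,[]) (T 0 (H 0)) (T 1 (H 1)) = Some ((6,i,0,[]), T 0 (H 0), LeftEnd, MoveS, MoveR)"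
    using r by (auto simp: rawd_def)
  have s: "tm_step 2 (mach ts S N K) (cn (5,i,0,[]), T, H) = Some (cn (6,i,0,[]), upd2 T H (T 0 (H 0)) LeftEnd, mv2 H MoveS MoveR)"
    apply (rule step_lemma[where T=T and H=H, OF c(1) rd c(2)])
    using r 0 by (auto simp: okw_def)
  show ?case
    apply (rule exI[of _ "upd2 T H (T 0 (H 0)) LeftEnd"], rule exI[of _ "mv2 H MoveS MoveR"])
    using tm_steps_one[OF s] 0 r by (auto simp: fun_eq_iff)
next
  case (Suc j)
  have r: "T 1 (H 1) \<noteq> LeftEnd" "T 1 (H 1) \<in> tape_syms S" using Suc.prems tp_in[OF Suc.prems(3)] by auto
  have c: "(5::nat,i,0::nat,[]::nat list) \<in> Ctrl ts S N K" using Suc.prems Npos by (auto simp: Ctrl_def)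
  have rd: "rawd ts (5,i,0,[]) (T 0 (H 0)) (T 1 (H 1)) = Some ((5,i,0,[]), T 0 (H 0), T 1 (H 1), MoveS, MoveL)"
    using r by (auto simp: rawd_def)
  have s: "tm_step 2 (mach ts S N K) (cn (5,i,0,[]), T, H) = Some (cn (5,i,0,[]), upd2 T H (T 0 (H 0)) (T 1 (H 1)), mv2 H MoveS MoveL)"
    apply (rule step_lemma[where T=T and H=H, OF c rd c])
    using r Suc.prems by (auto simp: okw_def)
  let ?T = "upd2 T H (T 0 (H 0)) (T 1 (H 1))" and ?H = "mv2 H MoveS MoveL"
  have pre: "?T 0 = T 0" "?T 1 = tp y" "?H 0 = H 0" "?H 1 = j" using Suc.prems by auto
  have "\<exists>T' H'. tm_steps 2 (mach ts S N K) (Suc j) (cn (5,i,0,[]), ?T, ?H)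
      = Some (cn (6, i, 0, []), T', H') \<and> T' 0 = ?T 0 \<and> H' 0 = ?H 0 \<and> T' 1 = tp y \<and> H' 1 = 1"
    apply (rule Suc.IH) using Suc.prems pre by simp_all
  then obtain T' H' where I: "tm_steps 2 (mach ts S N K) (Suc j) (cn (5,i,0,[]), ?T, ?H)
      = Some (cn (6, i, 0, []), T', H')" "T' 0 = T 0" "H' 0 = H 0" "T' 1 = tp y" "H' 1 = 1"
    using pre by auto
  show ?case
    apply (rule exI[of _ T'], rule exI[of _ H'])
    using tm_steps_comp[OF tm_steps_one[OF s] I(1)] I(2-) by simp
qed


lemma copy:
  assumes "i < length ts" "T 1 = tp y" "set y \<subseteq> S" "H 1 = Suc j" "H 0 = Suc j" "drop j y = zs" "j \<le> length y"
    "T 0 = (\<lambda>c. if c = 0 then LeftEnd else if c \<le> j then Sym (y!(c-1)) else B c)"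
    "\<forall>c. B c \<in> tape_syms S \<and> B c \<noteq> LeftEnd"
  shows "\<exists>T' H'. tm_steps 2 (mach ts S N K) (Suc (length zs)) (cn (6,i,0,[]), T, H)
      = Some (cn (7, i, 0, []), T', H') \<and> has_output (T' 0) y"
  using assms
proof (induction zs arbitrary: j T H)
  case Nil
  have j: "j = length y" using Nil by simp
  have r: "T 1 (H 1) = Blank" "T 0 (H 0) = B (Suc j)" using Nil j by auto
  have c: "(6::nat,i,0::nat,[]::nat list) \<in> Ctrl ts S N K" "(7::nat,i,0::nat,[]::nat list) \<in> Ctrl ts S N K" using Nil Npos by (auto simp: Ctrl_def)
  have rd: "rawd ts (6,i,0,[]) (T 0 (H 0)) (T 1 (H 1)) = Some ((7,i,0,[]), Blank, Blank, MoveS, MoveS)"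
    using r by (auto simp: rawd_def)
  have s: "tm_step 2 (mach ts S N K) (cn (6,i,0,[]), T, H) = Some (cn (7,i,0,[]), upd2 T H Blank Blank, mv2 H MoveS MoveS)"
    apply (rule step_lemma[where T=T and H=H, OF c(1) rd c(2)])
    using r Nil by (auto simp: okw_def)
  have "has_output (upd2 T H Blank Blank 0) y"
    using Nil j by (auto simp: has_output_def)
  moreover have "tm_steps 2 (mach ts S N K) (Suc (length ([]::nat list))) (cn (6,i,0,[]), T, H) = Some (cn (7,i,0,[]), upd2 T H Blank Blank, mv2 H MoveS MoveS)"
    using tm_steps_one[OF s] by (simp only: list.size)
  ultimately show ?case by blast
next
  case (Cons a zs)
  have jx: "j < length y" using Cons.prems(6) by (metis drop_eq_Nil list.distinct(1) not_le)
  have ya: "y ! j = a" using Cons.prems(6) jx by (metis Cons_nth_drop_Suc list.inject)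
  have dr: "drop (Suc j) y = zs" using Cons.prems(6) jx by (metis Cons_nth_drop_Suc list.inject)
  have aS: "a \<in> S" using Cons.prems(3) jx ya nth_mem by blast
  have r: "T 1 (H 1) = Sym a" "T 0 (H 0) = B (Suc j)" using Cons.prems jx ya by (auto simp: tp_def)
  have c: "(6::nat,i,0::nat,[]::nat list) \<in> Ctrl ts S N K" using Cons.prems Npos by (auto simp: Ctrl_def)
  have rd: "rawd ts (6,i,0,[]) (T 0 (H 0)) (T 1 (H 1)) = Some ((6,i,0,[]), Sym a, Sym a, MoveR, MoveR)"
    using r by (auto simp: rawd_def)
  have s: "tm_step 2 (mach ts S N K) (cn (6,i,0,[]), T, H) = Some (cn (6,i,0,[]), upd2 T H (Sym a) (Sym a), mv2 H MoveR MoveR)"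
    apply (rule step_lemma[where T=T and H=H, OF c rd c])
    using r Cons.prems aS by (auto simp: okw_def)
  let ?T = "upd2 T H (Sym a) (Sym a)" and ?H = "mv2 H MoveR MoveR"
  have pre: "?T 0 = (\<lambda>c. if c = 0 then LeftEnd else if c \<le> Suc j then Sym (y!(c-1)) else B c)"
     "?T 1 = tp y" "?H 0 = Suc (Suc j)" "?H 1 = Suc (Suc j)"
    using Cons.prems r ya by (auto simp: fun_eq_iff)
  have "\<exists>T' H'. tm_steps 2 (mach ts S N K) (Suc (length zs)) (cn (6,i,0,[]), ?T, ?H)
      = Some (cn (7, i, 0, []), T', H') \<and> has_output (T' 0) y"
    apply (rule Cons.IH[where j="Suc j"]) using Cons.prems pre dr jx by (simp_all add: Suc_le_eq)
  then obtain T' H' where I: "tm_steps 2 (mach ts S N K) (Suc (length zs)) (cn (6,i,0,[]), ?T, ?H)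
      = Some (cn (7, i, 0, []), T', H')" "has_output (T' 0) y" by blast
  show ?case
    apply (rule exI[of _ T'], rule exI[of _ H'])
    using tm_steps_comp[OF tm_steps_one[OF s] I(1)] I(2-) by simp
qed


theorem gen_lin: "lin_time_computable 2 S (\<lambda>x. concat (map (\<lambda>T. run T x) ts))"
proof -
  let ?M = "mach ts S N K" and ?m = "length ts"
  have runT: "set (run T x) \<subseteq> S \<and> length (run T x) \<le> K * (length x + 1)" if "T \<in> set ts" "set x \<subseteq> S" for T x
  proof -
    have "\<exists>i<length ts. ts!i = T" using that(1) by (simp add: in_set_conv_nth)
    then obtain i where "i < length ts" "T = ts!i" by auto
    then show ?thesis using run_in[of i x] that(2) by simp
  qed
  have part1: "\<forall>x\<in>lists S. concat (map (\<lambda>T. run T x) ts) \<in> lists S"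
  proof
    fix x assume "x \<in> lists S"
    then have "set x \<subseteq> S" by auto
    then have "\<forall>T\<in>set ts. set (run T x) \<subseteq> S" using runT by blast
    then show "concat (map (\<lambda>T. run T x) ts) \<in> lists S" by (rule concat_in_lists)
  qed
  let ?C = "3 * ?m + 3 * ?m * K + 4"
  have part2: "\<exists>t c. t \<le> ?C * (length x + 1) \<and> tm_steps 2 ?M t (init_config ?M x) = Some c \<and>
      tm_step 2 ?M c = None \<and> fst c \<in> tm_accept ?M \<and> has_output (fst (snd c) 0) (concat (map (\<lambda>T. run T x) ts))"
    if x: "x \<in> lists S" for x
  proof -
    let ?y = "concat (map (\<lambda>T. run T x) ts)"
    have xS: "set x \<subseteq> S" using x by auto
    have allS: "\<forall>T\<in>set ts. set (run T x) \<subseteq> S \<and> length (run T x) \<le> K * (length x + 1)" using runT xS by blast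
    have yS: "set ?y \<subseteq> S" using allS by (intro set_concat_sub) blast
    have ylen: "length ?y \<le> ?m * (K * (length x + 1))"
      using allS by (intro len_concat_le) blast
    define T0 where "T0 = (\<lambda>(i::nat) (j::nat). if j = 0 then LeftEnd else if i = 0 \<and> j \<le> length x then Sym (x ! (j - 1)) else Blank)"
    have ic: "init_config ?M x = (cn (0,0,0,[]), T0, \<lambda>i. 0)"
      by (simp add: init_config_def mach_def T0_def)
    have T00: "T0 0 = tp x" "T0 1 = tp []" by (auto simp: T0_def tp_def fun_eq_iff)
    have c0: "(0::nat,0::nat,0::nat,[]::nat list) \<in> Ctrl ts S N K" "(1::nat,0::nat,0::nat,[]::nat list) \<in> Ctrl ts S N K"
      using ne Npos by (auto simp: Ctrl_def)
    have rd: "rawd ts (0,0,0,[]) (T0 0 ((\<lambda>i. 0) 0)) (T0 1 ((\<lambda>i. 0) 1)) = Some ((1,0,0,[]), LeftEnd, LeftEnd, MoveR, MoveR)"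
      using T00 by (simp add: rawd_def)
    have s0: "tm_step 2 ?M (cn (0,0,0,[]), T0, \<lambda>i. 0) = Some (cn (1,0,0,[]), upd2 T0 (\<lambda>i. 0) LeftEnd LeftEnd, mv2 (\<lambda>i. 0) MoveR MoveR)"
      apply (rule step_lemma[where T=T0 and H="\<lambda>i. 0", OF c0(1) rd c0(2)])
      using T00 by (auto simp: okw_def)
    let ?T = "upd2 T0 (\<lambda>i. 0) LeftEnd LeftEnd" and ?H = "mv2 (\<lambda>i. 0) MoveR MoveR"
    have pre: "?T 0 = tp x" "?T 1 = tp []" "?H 0 = 1" "?H 1 = Suc (length ([]::nat list))"
      using T00 by (auto simp: fun_eq_iff)
    have "\<exists>T' H'. tm_steps 2 ?M ((?m - 0) * (2 * length x + 3) + length (concat (map (\<lambda>T. run T x) (drop 0 ts)))) (cn (1,0,0,[]), ?T, ?H)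
      = Some (cn (5, ?m - 1, 0, []), T', H')
     \<and> T' 0 = tp x \<and> H' 0 = 1 \<and> T' 1 = tp ([] @ concat (map (\<lambda>T. run T x) (drop 0 ts)))
     \<and> H' 1 = Suc (length ([] @ concat (map (\<lambda>T. run T x) (drop 0 ts))))"
      by (rule passes) (use pre xS ne in simp_all)
    then obtain T1 H1 where A: "tm_steps 2 ?M (?m * (2 * length x + 3) + length ?y) (cn (1,0,0,[]), ?T, ?H)
      = Some (cn (5, ?m - 1, 0, []), T1, H1)" "T1 0 = tp x" "H1 0 = 1" "T1 1 = tp ?y" "H1 1 = Suc (length ?y)"
      by auto
    have "\<exists>T' H'. tm_steps 2 ?M (Suc (Suc (length ?y))) (cn (5,?m - 1,0,[]), T1, H1)
      = Some (cn (6, ?m - 1, 0, []), T', H') \<and> T' 0 = T1 0 \<and> H' 0 = H1 0 \<and> T' 1 = tp ?y \<and> H' 1 = 1"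
      by (rule rew1) (use A yS ne tp_in[OF xS] in simp_all)
    then obtain T2 H2 where B: "tm_steps 2 ?M (Suc (Suc (length ?y))) (cn (5,?m - 1,0,[]), T1, H1)
      = Some (cn (6, ?m - 1, 0, []), T2, H2)" "T2 0 = tp x" "H2 0 = 1" "T2 1 = tp ?y" "H2 1 = 1"
      using A by auto
    define B0 where "B0 = (\<lambda>c. if c = 0 then Blank else tp x c)"
    have "\<exists>T' H'. tm_steps 2 ?M (Suc (length ?y)) (cn (6,?m - 1,0,[]), T2, H2)
      = Some (cn (7, ?m - 1, 0, []), T', H') \<and> has_output (T' 0) ?y"
      apply (rule copy[where j=0 and B=B0])
      using B(2-) yS ne tp_in[OF xS] by (auto simp: B0_def fun_eq_iff tp_pos)
    then obtain T3 H3 where C: "tm_steps 2 ?M (Suc (length ?y)) (cn (6,?m - 1,0,[]), T2, H2)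
      = Some (cn (7, ?m - 1, 0, []), T3, H3)" "has_output (T3 0) ?y" by (elim exE conjE)
    have tot: "tm_steps 2 ?M (Suc 0 + (?m * (2 * length x + 3) + length ?y) + Suc (Suc (length ?y)) + Suc (length ?y)) (init_config ?M x)
      = Some (cn (7, ?m - 1, 0, []), T3, H3)"
      unfolding ic by (rule tm_steps_comp[OF tm_steps_comp[OF tm_steps_comp[OF tm_steps_one[OF s0] A(1)] B(1)] C(1)])
    have fin: "tm_step 2 ?M (cn (7, ?m - 1, 0, []), T3, H3) = None"
      by (simp add: mach_def dl_def rawd_def)
    have acc: "cn (7, ?m - 1, 0, []) \<in> tm_accept ?M"
      using ne Npos by (auto simp: mach_def Ctrl_def)
    have bound: "Suc 0 + (?m * (2 * length x + 3) + length ?y) + Suc (Suc (length ?y)) + Suc (length ?y) \<le> ?C * (length x + 1)"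
    proof -
      have h1: "?m * (2 * length x + 3) \<le> 3 * ?m * (length x + 1)" by (simp add: algebra_simps)
      have e: "?C * (length x + 1) = 3 * ?m * (length x + 1) + 3 * (?m * (K * (length x + 1))) + 4 * (length x + 1)"
        by (simp add: algebra_simps)
      show ?thesis unfolding e by (rule arith_aux[OF h1 ylen])
    qed
    show ?thesis apply (rule exI[of _ "Suc 0 + (?m * (2 * length x + 3) + length ?y) + Suc (Suc (length ?y)) + Suc (length ?y)"], rule exI[of _ "(cn (7, ?m - 1, 0, []), T3, H3)"]) using tot fin acc bound C(2) by simp
  qed
  have alph: "tm_alpha ?M = S" by (simp add: mach_def)
  show ?thesis
    unfolding lin_time_computable_def
    apply (rule conjI[OF part1])
    apply (rule exI[of _ ?M], rule exI[of _ ?C])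
    using part2 valid_mach[OF finS ne Npos] alph by simp
qed

end

fun red :: "f2_letter list \<Rightarrow> bool" where
  "red [] = True"
| "red [x] = True"
| "red (x#y#w) = (y \<noteq> inv_letter x \<and> red (y#w))"

lemma inv_inv[simp]: "inv_letter (inv_letter x) = x" by (simp add: inv_letter_def)
lemma inv_neq[simp]: "inv_letter x \<noteq> x" "x \<noteq> inv_letter x" by (auto simp: inv_letter_def prod_eq_iff)
lemma inv_eq_iff[simp]: "inv_letter x = inv_letter y \<longleftrightarrow> x = y" by (auto simp: inv_letter_def prod_eq_iff)

lemma red_iff: "f2_reduced w = red w"
proof (induction w rule: red.induct)
  case 1 then show ?case by (simp add: f2_reduced_def)
next
  case (2 x) then show ?case by (simp add: f2_reduced_def)
next
  case (3 x y w)
  have "f2_reduced (x#y#w) \<longleftrightarrow> y \<noteq> inv_letter x \<and> f2_reduced (y#w)"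
  proof
    assume h: "f2_reduced (x#y#w)"
    have "y \<noteq> inv_letter x" using h[unfolded f2_reduced_def, rule_format, of 0] by simp
    moreover have "f2_reduced (y#w)" unfolding f2_reduced_def
    proof (intro allI impI)
      fix i assume "Suc i < length (y#w)"
      then show "(y#w) ! Suc i \<noteq> inv_letter ((y#w) ! i)"
        using h[unfolded f2_reduced_def, rule_format, of "Suc i"] by simp
    qed
    ultimately show "y \<noteq> inv_letter x \<and> f2_reduced (y#w)" by simp
  next
    assume h: "y \<noteq> inv_letter x \<and> f2_reduced (y#w)"
    show "f2_reduced (x#y#w)" unfolding f2_reduced_def
    proof (intro allI impI)
      fix i assume i: "Suc i < length (x#y#w)"
      show "(x#y#w) ! Suc i \<noteq> inv_letter ((x#y#w) ! i)"
      proof (cases i)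
        case 0 then show ?thesis using h by simp
      next
        case (Suc j) then show ?thesis using h i[unfolded Suc] unfolding f2_reduced_def by auto
      qed
    qed
  qed
  then show ?case using 3 by simp
qed

lemma red_Cons: "red (x#w) \<longleftrightarrow> red w \<and> (w \<noteq> [] \<longrightarrow> hd w \<noteq> inv_letter x)"
  by (cases w) auto

lemma red_snoc: "red (w @ [x]) \<longleftrightarrow> red w \<and> (w \<noteq> [] \<longrightarrow> x \<noteq> inv_letter (last w))"
  by (induction w rule: red.induct) auto

lemma red_appendD: "red (u @ v) \<Longrightarrow> red u"
  by (induction u rule: red.induct) auto

lemma red_butlast: "red w \<Longrightarrow> red (butlast w)"
  by (cases w rule: rev_cases) (auto dest: red_appendD)

definition f2inv :: "f2_letter list \<Rightarrow> f2_letter list" where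
  "f2inv g = rev (map inv_letter g)"

lemma red_f2inv: "red g \<Longrightarrow> red (f2inv g)"
proof (induction g)
  case Nil then show ?case by (simp add: f2inv_def)
next
  case (Cons x w)
  have "red w" using Cons.prems by (simp add: red_Cons)
  then have "red (f2inv w)" by (rule Cons.IH)
  then show ?case using Cons.prems
    by (auto simp: f2inv_def red_snoc red_Cons last_rev hd_map)
qed

lemma f2inv_inv[simp]: "f2inv (f2inv g) = g"
  by (simp add: f2inv_def rev_map comp_def)

lemma mult_letter_red: "red w \<Longrightarrow> red (f2_mult_letter w x)"
  by (auto simp: f2_mult_letter_def red_butlast red_snoc)

lemma mult_letter_cancel: "red w \<Longrightarrow> f2_mult_letter (f2_mult_letter w x) (inv_letter x) = w"
proof (cases "w \<noteq> [] \<and> last w = inv_letter x")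
  case True
  assume r: "red w"
  obtain u where u: "w = u @ [inv_letter x]" using True by (metis append_butlast_last_id)
  have "u \<noteq> [] \<longrightarrow> last u \<noteq> x" using r u by (auto simp: red_snoc)
  then show ?thesis using True u by (auto simp: f2_mult_letter_def)
next
  case False
  then show ?thesis by (auto simp: f2_mult_letter_def)
qed

lemma f2_mult_Cons: "f2_mult u (x#v) = f2_mult (f2_mult_letter u x) v"
  by (simp add: f2_mult_def)
lemma f2_mult_snoc: "f2_mult u (v@[x]) = f2_mult_letter (f2_mult u v) x"
  by (simp add: f2_mult_def)
lemma f2_mult_Nil[simp]: "f2_mult u [] = u"
  by (simp add: f2_mult_def)

lemma mult_red: "red u \<Longrightarrow> red (f2_mult u v)"
  by (induction v arbitrary: u) (auto simp: f2_mult_Cons mult_letter_red)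

lemma mult_letter_assoc:
  assumes "red a" "red b"
  shows "f2_mult a (f2_mult_letter b x) = f2_mult_letter (f2_mult a b) x"
proof (cases "b \<noteq> [] \<and> last b = inv_letter x")
  case True
  obtain b' where b: "b = b' @ [inv_letter x]" using True by (metis append_butlast_last_id)
  have "red (f2_mult a b')" using mult_red[OF assms(1)] .
  then have "f2_mult_letter (f2_mult_letter (f2_mult a b') (inv_letter x)) x = f2_mult a b'"
    using mult_letter_cancel[of "f2_mult a b'" "inv_letter x"] by simp
  then show ?thesis using True b by (simp add: f2_mult_letter_def f2_mult_snoc)
next
  case False
  then have "f2_mult_letter b x = b @ [x]" by (auto simp: f2_mult_letter_def)
  then show ?thesis by (simp add: f2_mult_snoc)
qed

lemma mult_assoc:
  assumes "red a" "red b"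
  shows "f2_mult a (f2_mult b c) = f2_mult (f2_mult a b) c"
proof (induction c rule: rev_induct)
  case Nil then show ?case by simp
next
  case (snoc x c)
  have "f2_mult a (f2_mult b (c @ [x])) = f2_mult a (f2_mult_letter (f2_mult b c) x)" by (simp add: f2_mult_snoc)
  also have "\<dots> = f2_mult_letter (f2_mult a (f2_mult b c)) x"
    by (rule mult_letter_assoc[OF assms(1) mult_red[OF assms(2)]])
  also have "\<dots> = f2_mult (f2_mult a b) (c @ [x])" using snoc by (simp add: f2_mult_snoc)
  finally show ?case .
qed

lemma mult_Nil_left: "red v \<Longrightarrow> f2_mult [] v = v"
proof (induction v rule: rev_induct)
  case Nil then show ?case by simp
next
  case (snoc x v)
  have "red v" using snoc.prems by (simp add: red_snoc)
  then show ?case using snoc by (auto simp: f2_mult_snoc f2_mult_letter_def red_snoc)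
qed

lemma mult_inv_right: "red g \<Longrightarrow> f2_mult g (f2inv g) = []"
proof (induction g rule: rev_induct)
  case Nil then show ?case by (simp add: f2inv_def)
next
  case (snoc x g)
  have rg: "red g" using snoc.prems by (simp add: red_snoc)
  have "f2inv (g @ [x]) = inv_letter x # f2inv g" by (simp add: f2inv_def)
  then have "f2_mult (g @ [x]) (f2inv (g @ [x])) = f2_mult (f2_mult_letter (g @ [x]) (inv_letter x)) (f2inv g)"
    by (simp add: f2_mult_Cons)
  also have "f2_mult_letter (g @ [x]) (inv_letter x) = g" by (simp add: f2_mult_letter_def)
  finally show ?case using snoc.IH[OF rg] by simp
qed

lemma mult_inv_left: "red g \<Longrightarrow> f2_mult (f2inv g) g = []"
  using mult_inv_right[OF red_f2inv, of g] by simp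

lemma transl_inv1: "red g \<Longrightarrow> red f \<Longrightarrow> f2_mult g (f2_mult (f2inv g) f) = f"
  by (simp add: mult_assoc red_f2inv mult_inv_right mult_Nil_left)

lemma transl_inv2: "red g \<Longrightarrow> red f \<Longrightarrow> f2_mult (f2inv g) (f2_mult g f) = f"
  by (simp add: mult_assoc red_f2inv mult_inv_left mult_Nil_left)

lemma transl_inj: "red g \<Longrightarrow> inj_on (f2_mult g) {w. red w}"
  by (rule inj_on_inverseI[where g="f2_mult (f2inv g)"]) (simp add: transl_inv2)

definition encl :: "f2_letter \<Rightarrow> nat" where
  "encl x = (if fst x then 2 else 0) + (if snd x then 1 else 0)"
definition decl :: "nat \<Rightarrow> f2_letter" where
  "decl n = (2 \<le> n, odd n)"
definition ic :: "nat \<Rightarrow> nat" where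
  "ic c = (if even c then Suc c else c - 1)"

lemma decl_encl[simp]: "decl (encl x) = x"
  by (cases x) (auto simp: encl_def decl_def)
lemma encl_lt[simp]: "encl x < 4"
  by (auto simp: encl_def)
lemma encl_neq4[simp]: "encl x \<noteq> 4" "4 \<noteq> encl x"
  by (metis encl_lt order_less_irrefl)+
lemma encl_le4[simp]: "encl x \<le> 4"
  by (metis encl_lt order_less_imp_le)
lemma encl_inj[simp]: "encl x = encl y \<longleftrightarrow> x = y"
  by (metis decl_encl)
lemma encl_inv: "encl (inv_letter x) = ic (encl x)"
  by (cases x) (auto simp: encl_def ic_def inv_letter_def)
lemma ic_ic[simp]: "ic (ic c) = c"
  by (auto simp: ic_def)
lemma ic_lt: "c < 4 \<Longrightarrow> ic c < 4"
  by (auto simp: ic_def)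

abbreviation enc :: "f2_letter list \<Rightarrow> nat list" where "enc \<equiv> map encl"
abbreviation dec :: "nat list \<Rightarrow> f2_letter list" where "dec \<equiv> map decl"

lemma decl_comp_encl[simp]: "decl \<circ> encl = id" by (auto simp: fun_eq_iff)
lemma dec_enc[simp]: "dec (enc w) = w" by (induction w) auto
lemma enc_inj[simp]: "enc u = enc v \<longleftrightarrow> u = v" by (metis dec_enc)
lemma no4_enc: "\<forall>a\<in>set (enc w). a \<noteq> 4" by auto

fun chunks :: "nat list \<Rightarrow> nat list list" where
  "chunks [] = [[]]"
| "chunks (a#w) = (if a = 4 then [] # chunks w else (a # hd (chunks w)) # tl (chunks w))"

lemma chunks_ne: "chunks w \<noteq> []" by (induction w) auto

lemma chunks_A: "\<forall>a\<in>set g. a \<noteq> 4 \<Longrightarrow> chunks (g @ r) = (g @ hd (chunks r)) # tl (chunks r)"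
  by (induction g) (auto simp: chunks_ne)

lemma chunks_B: "chunks (concat (map (\<lambda>e. 4#e) Es)) = [] # Es" if "\<forall>e\<in>set Es. \<forall>a\<in>set e. a \<noteq> 4"
  using that
proof (induction Es)
  case Nil then show ?case by simp
next
  case (Cons e Es)
  have "chunks (concat (map (\<lambda>e. 4#e) (e#Es))) = [] # chunks (e @ concat (map (\<lambda>e. 4#e) Es))" by simp
  also have "chunks (e @ concat (map (\<lambda>e. 4#e) Es)) = e # Es"
    using chunks_A[of e "concat (map (\<lambda>e. 4#e) Es)"] Cons by simp
  finally show ?case .
qed

definition rep :: "f2_letter list \<Rightarrow> f2_letter list list \<Rightarrow> nat list" where
  "rep g Fs = enc g @ concat (map (\<lambda>e. 4 # e) (map enc Fs))"

lemma chunks_rep: "chunks (rep g Fs) = enc g # map enc Fs"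
proof -
  have "chunks (rep g Fs) = (enc g @ hd (chunks (concat (map (\<lambda>e. 4 # e) (map enc Fs))))) # tl (chunks (concat (map (\<lambda>e. 4 # e) (map enc Fs))))"
    unfolding rep_def by (rule chunks_A) auto
  also have "chunks (concat (map (\<lambda>e. 4 # e) (map enc Fs))) = [] # map enc Fs"
    by (rule chunks_B) auto
  finally show ?thesis by simp
qed

definition psi :: "nat list \<Rightarrow> f2_letter list set \<times> f2_letter list" where
  "psi w = (let cs = chunks w in (f2_mult (dec (hd cs)) ` set (map dec (tl cs)), dec (hd cs)))"

lemma psi_rep: "psi (rep g Fs) = (f2_mult g ` set Fs, g)"
proof -
  have "set (map dec (map enc Fs)) = set Fs" by (induction Fs) auto
  then show ?thesis by (simp add: psi_def chunks_rep Let_def image_image)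
qed

definition goodrep :: "f2_letter list \<Rightarrow> f2_letter list list \<Rightarrow> bool" where
  "goodrep g Fs \<longleftrightarrow> red g \<and> (\<forall>e\<in>set Fs. red e) \<and> sorted_wrt (<) (map enc Fs)"

definition Lset :: "nat list set" where
  "Lset = {rep g Fs | g Fs. goodrep g Fs}"

lemma carrier_lamp: "carrier lamp_F2 = {(F, g). finite F \<and> F \<subseteq> {w. red w} \<and> red g}"
  by (auto simp: lamp_F2_def F2_def red_iff)

lemma rep_in_lists: "rep g Fs \<in> lists {..4}"
  by (auto simp: rep_def less_imp_le split: if_splits)

lemma bij_psi: "bij_betw psi Lset (carrier lamp_F2)"
proof (rule bij_betw_imageI)
  show "inj_on psi Lset"
  proof (rule inj_onI)
    fix w1 w2 assume w1: "w1 \<in> Lset" and w2: "w2 \<in> Lset" and eq: "psi w1 = psi w2"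
    obtain g1 Fs1 where 1: "w1 = rep g1 Fs1" "goodrep g1 Fs1" using w1 by (auto simp: Lset_def)
    obtain g2 Fs2 where 2: "w2 = rep g2 Fs2" "goodrep g2 Fs2" using w2 by (auto simp: Lset_def)
    have g: "g1 = g2" and im: "f2_mult g1 ` set Fs1 = f2_mult g1 ` set Fs2" using eq 1 2 by (auto simp: psi_rep)
    have "inj_on (f2_mult g1) {w. red w}" using 1 by (intro transl_inj) (simp add: goodrep_def)
    moreover have "set Fs1 \<subseteq> {w. red w}" "set Fs2 \<subseteq> {w. red w}" using 1(2) 2(2) by (auto simp: goodrep_def)
    ultimately have "set Fs1 = set Fs2" using im inj_on_image_eq_iff by metis
    then have "set (map enc Fs1) = set (map enc Fs2)" by simp
    then have "map enc Fs1 = map enc Fs2" using 1(2) 2(2) by (metis goodrep_def strict_sorted_equal)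
    then have "Fs1 = Fs2" by (metis list.map_comp dec_enc comp_def map_idI)
    then show "w1 = w2" using 1 2 g by simp
  qed
next
  show "psi ` Lset = carrier lamp_F2"
  proof
    show "psi ` Lset \<subseteq> carrier lamp_F2"
    proof
      fix p assume "p \<in> psi ` Lset"
      then obtain g Fs where "p = psi (rep g Fs)" "goodrep g Fs" by (auto simp: Lset_def)
      then show "p \<in> carrier lamp_F2" by (auto simp: psi_rep carrier_lamp goodrep_def mult_red)
    qed
  next
    show "carrier lamp_F2 \<subseteq> psi ` Lset"
    proof
      fix p assume "p \<in> carrier lamp_F2"
      then obtain F g where p: "p = (F, g)" "finite F" "F \<subseteq> {w. red w}" "red g" by (auto simp: carrier_lamp)
      define Cs where "Cs = sorted_list_of_set (enc ` f2_mult (f2inv g) ` F)"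
      define Fs where "Fs = map dec Cs"
      have fin: "finite (enc ` f2_mult (f2inv g) ` F)" using p by simp
      have setCs: "set Cs = enc ` f2_mult (f2inv g) ` F" using fin by (simp add: Cs_def)
      have "map enc Fs = Cs"
      proof -
        have "\<forall>c\<in>set Cs. enc (dec c) = c" using setCs by auto
        then show ?thesis unfolding Fs_def by (induction Cs) auto
      qed
      moreover have "set Fs = f2_mult (f2inv g) ` F" using setCs unfolding Fs_def by (auto simp: image_image)
      ultimately have good: "goodrep g Fs" and setFs: "set Fs = f2_mult (f2inv g) ` F"
        using p by (auto simp: goodrep_def Cs_def mult_red red_f2inv)
      have "f2_mult g ` set Fs = F"
        using p unfolding setFs image_image by (auto simp: transl_inv1 red_f2inv mult_red image_iff subset_iff)
      then have "psi (rep g Fs) = p" using p by (simp add: psi_rep)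
      moreover have "rep g Fs \<in> Lset" using good by (auto simp: Lset_def)
      ultimately show "p \<in> psi ` Lset" by blast
    qed
  qed
qed

lemma outs_append: "outs d q (u @ v) = outs d q u @ outs d (st d q u) v"
  by (induction u arbitrary: q) auto
lemma st_append: "st d q (u @ v) = st d (st d q u) v"
  by (induction u arbitrary: q) auto

lemma stay: "\<forall>a\<in>set u. d q a = (q, h a) \<Longrightarrow> outs d q u = concat (map h u) \<and> st d q u = q"
  by (induction u) auto

lemma copy_stay: "\<forall>a\<in>set u. d q a = (q, [a]) \<Longrightarrow> outs d q u = u \<and> st d q u = q"
  by (induction u) auto

lemma chunk_pass:
  assumes dq4: "\<forall>q>0. d q 4 = (1, f q)"
  and el: "\<forall>e\<in>set (e0#Es). 0 < st d 1 e \<and> outs d 1 e @ f (st d 1 e) = oe e"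
  shows "outs d 1 (e0 @ concat (map (\<lambda>e. 4#e) Es)) @ f (st d 1 (e0 @ concat (map (\<lambda>e. 4#e) Es)))
     = oe e0 @ concat (map oe Es)"
  using el
proof (induction Es arbitrary: e0)
  case Nil then show ?case by simp
next
  case (Cons e2 Es)
  let ?r = "e2 @ concat (map (\<lambda>e. 4#e) Es)"
  have q: "0 < st d 1 e0" "outs d 1 e0 @ f (st d 1 e0) = oe e0" using Cons.prems by auto
  have "e0 @ concat (map (\<lambda>e. 4#e) (e2#Es)) = e0 @ [4] @ ?r" by simp
  then have "outs d 1 (e0 @ concat (map (\<lambda>e. 4#e) (e2#Es))) @ f (st d 1 (e0 @ concat (map (\<lambda>e. 4#e) (e2#Es))))
     = (outs d 1 e0 @ f (st d 1 e0)) @ (outs d 1 ?r @ f (st d 1 ?r))"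
    using dq4 q(1) by (simp add: outs_append st_append)
  also have "outs d 1 ?r @ f (st d 1 ?r) = oe e2 @ concat (map oe Es)"
    using Cons.IH[of e2] Cons.prems by simp
  finally show ?case using q(2) by simp
qed

lemma elem_pass:
  assumes d0: "\<forall>a. a \<noteq> 4 \<longrightarrow> d 0 a = (0, [])" and d04: "d 0 4 = (1, [])" and f0: "f 0 = []"
  and dq4: "\<forall>q>0. d q 4 = (1, f q)"
  and el: "\<forall>e\<in>set Es. 0 < st d 1 e \<and> outs d 1 e @ f (st d 1 e) = oe e"
  and g: "\<forall>a\<in>set g. a \<noteq> 4"
  shows "run (d, f) (g @ concat (map (\<lambda>e. 4#e) Es)) = concat (map oe Es)"
proof -
  have g0: "outs d 0 g = [] \<and> st d 0 g = 0" using stay[of g d 0 "\<lambda>_. []"] g d0 by auto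
  show ?thesis
  proof (cases Es)
    case Nil then show ?thesis using g0 f0 by (simp add: run_def)
  next
    case (Cons e0 Es')
    have "g @ concat (map (\<lambda>e. 4#e) Es) = g @ [4] @ (e0 @ concat (map (\<lambda>e. 4#e) Es'))" using Cons by simp
    then show ?thesis
      using g0 d04 chunk_pass[of d f e0 Es' oe, OF dq4] el Cons by (simp add: run_def outs_append st_append)
  qed
qed

definition fS :: "(nat option \<Rightarrow> bool) \<Rightarrow> nat \<Rightarrow> nat list" where
  "fS P q = (if q = 2 \<and> P None then [4] else [])"
definition dS :: "nat \<Rightarrow> (nat option \<Rightarrow> bool) \<Rightarrow> nat \<Rightarrow> nat \<Rightarrow> nat \<times> nat list" where
  "dS c P q a = (if q = 0 then (if a = 4 then (1, []) else (0, []))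
     else if a = 4 then (1, fS P q)
     else if q = 1 then (if a = c then (2, []) else (4, []))
     else if q = 2 then (if P (Some a) then (3, [4, a]) else (4, []))
     else if q = 3 then (3, [a]) else (4, []))"
definition oeS :: "nat \<Rightarrow> (nat option \<Rightarrow> bool) \<Rightarrow> nat list \<Rightarrow> nat list" where
  "oeS c P u = (if u \<noteq> [] \<and> hd u = c \<and> P (if tl u = [] then None else Some (hd (tl u))) then 4 # tl u else [])"

lemma elS: assumes "\<forall>a\<in>set u. a \<noteq> 4" "c \<noteq> 4"
  shows "0 < st (dS c P) 1 u \<and> outs (dS c P) 1 u @ fS P (st (dS c P) 1 u) = oeS c P u"
proof (cases u)
  case Nil then show ?thesis by (simp add: fS_def oeS_def)
next
  case (Cons a r)
  have s4: "outs (dS c P) 4 v = [] \<and> st (dS c P) 4 v = 4" if "\<forall>a\<in>set v. a \<noteq> 4" for v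
    using stay[of v "dS c P" 4 "\<lambda>_. []"] that by (auto simp: dS_def)
  have s3: "outs (dS c P) 3 v = v \<and> st (dS c P) 3 v = 3" if "\<forall>a\<in>set v. a \<noteq> 4" for v
    using stay[of v "dS c P" 3 "\<lambda>a. [a]"] that by (auto simp: dS_def)
  show ?thesis
  proof (cases "a = c")
    case False then show ?thesis using Cons assms s4[of r] by (simp add: dS_def fS_def oeS_def)
  next
    case True
    show ?thesis
    proof (cases r)
      case Nil then show ?thesis using Cons True assms by (simp add: dS_def fS_def oeS_def)
    next
      case (Cons b r')
      then show ?thesis using \<open>u = a # r\<close> True assms s4[of r'] s3[of r'] by (simp add: dS_def fS_def oeS_def)
    qed
  qed
qed

definition fP :: "nat \<Rightarrow> nat \<Rightarrow> nat list" where
  "fP c q = (if q = 1 then [4, ic c] else [])"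
definition dP :: "nat \<Rightarrow> nat \<Rightarrow> nat \<Rightarrow> nat \<times> nat list" where
  "dP c q a = (if q = 0 then (if a = 4 then (1, []) else (0, []))
     else if a = 4 then (1, fP c q)
     else if q = 1 then (if a = c then (4, []) else (3, [4, ic c, a]))
     else if q = 3 then (3, [a]) else (4, []))"
definition oeP :: "nat \<Rightarrow> nat list \<Rightarrow> nat list" where
  "oeP c u = (if u \<noteq> [] \<and> hd u = c then [] else 4 # ic c # u)"

lemma elP: assumes "\<forall>a\<in>set u. a \<noteq> 4" "c \<noteq> 4"
  shows "0 < st (dP c) 1 u \<and> outs (dP c) 1 u @ fP c (st (dP c) 1 u) = oeP c u"
proof (cases u)
  case Nil then show ?thesis by (simp add: fP_def oeP_def)
next
  case (Cons a r)
  have s4: "outs (dP c) 4 v = [] \<and> st (dP c) 4 v = 4" if "\<forall>a\<in>set v. a \<noteq> 4" for v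
    using stay[of v "dP c" 4 "\<lambda>_. []"] that by (auto simp: dP_def)
  have s3: "outs (dP c) 3 v = v \<and> st (dP c) 3 v = 3" if "\<forall>a\<in>set v. a \<noteq> 4" for v
    using stay[of v "dP c" 3 "\<lambda>a. [a]"] that by (auto simp: dP_def)
  show ?thesis using Cons assms s4[of r] s3[of r] by (simp add: dP_def fP_def oeP_def)
qed

lemma runS: assumes "c \<noteq> 4" shows "run (dS c P, fS P) (rep g Fs) = concat (map (oeS c P) (map enc Fs))"
proof -
  have el: "\<forall>u\<in>set (map enc Fs). 0 < st (dS c P) 1 u \<and> outs (dS c P) 1 u @ fS P (st (dS c P) 1 u) = oeS c P u"
  proof
    fix u assume "u \<in> set (map enc Fs)"
    then have "\<forall>a\<in>set u. a \<noteq> 4" by auto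
    then show "0 < st (dS c P) 1 u \<and> outs (dS c P) 1 u @ fS P (st (dS c P) 1 u) = oeS c P u"
      using elS assms by blast
  qed
  show ?thesis unfolding rep_def
    by (rule elem_pass[OF _ _ _ _ el]) (auto simp: dS_def fS_def)
qed

lemma runP: assumes "c \<noteq> 4" shows "run (dP c, fP c) (rep g Fs) = concat (map (oeP c) (map enc Fs))"
proof -
  have el: "\<forall>u\<in>set (map enc Fs). 0 < st (dP c) 1 u \<and> outs (dP c) 1 u @ fP c (st (dP c) 1 u) = oeP c u"
  proof
    fix u assume "u \<in> set (map enc Fs)"
    then have "\<forall>a\<in>set u. a \<noteq> 4" by auto
    then show "0 < st (dP c) 1 u \<and> outs (dP c) 1 u @ fP c (st (dP c) 1 u) = oeP c u"
      using elP assms by blast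
  qed
  show ?thesis unfolding rep_def
    by (rule elem_pass[OF _ _ _ _ el]) (auto simp: dP_def fP_def)
qed


definition gend :: "nat \<Rightarrow> nat \<Rightarrow> nat list" where
  "gend c q = (if q = 0 then [c] else if q - 1 = ic c then [] else [q - 1, c])"
definition fG :: "nat \<Rightarrow> nat \<Rightarrow> nat list" where
  "fG c q = (if q = 5 then [] else gend c q)"
definition dG :: "nat \<Rightarrow> nat \<Rightarrow> nat \<Rightarrow> nat \<times> nat list" where
  "dG c q a = (if q = 5 then (5, []) else if a = 4 then (5, gend c q) else (Suc a, if q = 0 then [] else [q - 1]))"

definition pend :: "nat \<Rightarrow> nat list" where "pend q = (if q = 0 then [] else [q - 1])"
lemma pend_0[simp]: "pend 0 = []" and pend_Suc[simp]: "pend (Suc a) = [a]" by (simp_all add: pend_def)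

lemma G_pending: "\<forall>a\<in>set u. a < 4 \<Longrightarrow> q \<le> 4 \<Longrightarrow>
   outs (dG c) q u @ pend (st (dG c) q u) = pend q @ u \<and> st (dG c) q u = (if u = [] then q else Suc (last u))"
proof (induction u arbitrary: q)
  case Nil then show ?case by simp
next
  case (Cons a u)
  have a: "a < 4" "a \<noteq> 4" using Cons.prems by auto
  have d: "dG c q a = (Suc a, pend q)" using a Cons.prems by (auto simp: dG_def pend_def)
  have pre1: "\<forall>a\<in>set u. a < 4" using Cons.prems by simp
  have pre2: "Suc a \<le> 4" using a by simp
  note IH = Cons.IH[OF pre1 pre2]
  have I1: "outs (dG c) (Suc a) u @ pend (st (dG c) (Suc a) u) = a # u" using conjunct1[OF IH] by simp
  have I2: "st (dG c) (Suc a) u = (if u = [] then Suc a else Suc (last u))" using conjunct2[OF IH] .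
  show ?case using d I1 I2 by simp
qed

lemma runG: "run (dG (encl x), fG (encl x)) (rep g Fs) = enc (f2_mult_letter g x)"
proof -
  let ?c = "encl x"
  let ?q = "st (dG ?c) 0 (enc g)"
  have P0: "outs (dG ?c) 0 (enc g) @ pend ?q = pend 0 @ enc g \<and> ?q = (if enc g = [] then 0 else Suc (last (enc g)))"
    by (rule G_pending) auto
  have P1: "outs (dG ?c) 0 (enc g) @ pend ?q = enc g" using conjunct1[OF P0] by simp
  have P2: "?q = (if g = [] then 0 else Suc (encl (last g)))" using conjunct2[OF P0] by (simp add: last_map)
  have P: "outs (dG ?c) 0 (enc g) @ pend ?q = enc g \<and> ?q = (if g = [] then 0 else Suc (encl (last g)))"
    using P1 P2 by blast
  have q5: "?q \<noteq> 5" using P by auto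
  have A: "run (dG ?c, fG ?c) (rep g Fs) = outs (dG ?c) 0 (enc g) @ gend ?c ?q"
  proof (cases Fs)
    case Nil then show ?thesis using q5 by (simp add: rep_def run_def fG_def)
  next
    case (Cons e Fs')
    have r: "rep g Fs = enc g @ [4] @ (enc e @ concat (map (\<lambda>e. 4 # e) (map enc Fs')))" using Cons by (simp add: rep_def)
    have s5: "outs (dG ?c) 5 v = [] \<and> st (dG ?c) 5 v = 5" for v
      using stay[of v "dG ?c" 5 "\<lambda>_. []"] by (simp add: dG_def)
    show ?thesis unfolding r using q5 s5 by (simp add: run_def outs_append st_append dG_def fG_def)
  qed
  show ?thesis
  proof (cases "g = []")
    case True then show ?thesis using A P by (simp add: gend_def f2_mult_letter_def)
  next
    case False
    then obtain g' l where g: "g = g' @ [l]" by (metis append_butlast_last_id)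
    have qq: "?q = Suc (encl l)" using P2 g by simp
    have o: "outs (dG ?c) 0 (enc g) = enc g'" using P1 qq g by simp
    have "encl l = ic (encl x) \<longleftrightarrow> l = inv_letter x"
      by (metis encl_inv encl_inj)
    then show ?thesis using A o qq g by (auto simp: gend_def f2_mult_letter_def)
  qed
qed

definition fT :: "nat \<Rightarrow> nat list" where "fT q = (if q = 0 then [4] else [])"
definition dT :: "nat \<Rightarrow> nat \<Rightarrow> nat \<times> nat list" where
  "dT q a = (if q = 0 then (if a = 4 then (1, []) else (0, [a]))
     else if q = 1 then (if a = 4 then (2, [4]) else (2, [4, 4, a])) else (2, [a]))"

definition togl :: "f2_letter list list \<Rightarrow> f2_letter list list" where
  "togl Fs = (if Fs \<noteq> [] \<and> hd Fs = [] then tl Fs else [] # Fs)"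

lemma runT: "run (dT, fT) (rep g Fs) = rep g (togl Fs)"
proof -
  have s0: "outs dT 0 (enc g) = enc g \<and> st dT 0 (enc g) = 0"
    using copy_stay[of "enc g" dT 0] by (auto simp: dT_def)
  have s2: "outs dT 2 v = v \<and> st dT 2 v = 2" for v
    using copy_stay[of v dT 2] by (auto simp: dT_def)
  show ?thesis
  proof (cases Fs)
    case Nil then show ?thesis using s0 by (simp add: rep_def run_def fT_def togl_def)
  next
    case (Cons e Fs')
    show ?thesis
    proof (cases e)
      case Nil
      show ?thesis
      proof (cases Fs')
        case Nil2: Nil
        then show ?thesis using Cons Nil s0 by (simp add: rep_def run_def fT_def dT_def togl_def outs_append st_append)
      next
        case Cons2: (Cons e2 Fs'')
        have r: "rep g Fs = enc g @ [4] @ [4] @ (enc e2 @ concat (map (\<lambda>e. 4 # e) (map enc Fs'')))"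
          using Cons Nil Cons2 by (simp add: rep_def)
        show ?thesis unfolding r using Cons Nil Cons2 s0 s2
          by (simp add: rep_def run_def fT_def dT_def togl_def outs_append st_append)
      qed
    next
      case Cons3: (Cons a r)
      have r: "rep g Fs = enc g @ [4] @ [encl a] @ (enc r @ concat (map (\<lambda>e. 4 # e) (map enc Fs')))"
        using Cons Cons3 by (simp add: rep_def)
      show ?thesis unfolding r using Cons Cons3 s0 s2
        by (simp add: rep_def run_def fT_def dT_def togl_def outs_append st_append)
    qed
  qed
qed

definition Plo :: "f2_letter \<Rightarrow> nat option \<Rightarrow> bool" where
  "Plo x ob = (case ob of None \<Rightarrow> True | Some b \<Rightarrow> b < ic (encl x))"
definition Phi :: "f2_letter \<Rightarrow> nat option \<Rightarrow> bool" where
  "Phi x ob = (case ob of None \<Rightarrow> False | Some b \<Rightarrow> ic (encl x) < b)"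

definition sx :: "f2_letter \<Rightarrow> f2_letter list \<Rightarrow> bool" where
  "sx x e \<longleftrightarrow> e \<noteq> [] \<and> hd e = x"
definition lo :: "f2_letter \<Rightarrow> f2_letter list \<Rightarrow> bool" where
  "lo x e \<longleftrightarrow> sx x e \<and> (tl e = [] \<or> encl (hd (tl e)) < ic (encl x))"
definition hi :: "f2_letter \<Rightarrow> f2_letter list \<Rightarrow> bool" where
  "hi x e \<longleftrightarrow> sx x e \<and> tl e \<noteq> [] \<and> ic (encl x) < encl (hd (tl e))"

lemma oeS_lo: "oeS (encl x) (Plo x) (enc e) = (if lo x e then 4 # enc (tl e) else [])"
  by (cases e; cases "tl e") (auto simp: oeS_def Plo_def lo_def sx_def)
lemma oeS_hi: "oeS (encl x) (Phi x) (enc e) = (if hi x e then 4 # enc (tl e) else [])"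
  by (cases e; cases "tl e") (auto simp: oeS_def Phi_def hi_def sx_def)
lemma oeP_enc: "oeP (encl x) (enc e) = (if sx x e then [] else 4 # enc (inv_letter x # e))"
  by (cases e) (auto simp: oeP_def sx_def encl_inv)

lemma filt: "concat (map (\<lambda>e. if p e then 4 # h e else []) Fs) = concat (map (\<lambda>e. 4 # e) (map h (filter p Fs)))"
  by (induction Fs) auto

definition newFs :: "f2_letter \<Rightarrow> f2_letter list list \<Rightarrow> f2_letter list list" where
  "newFs x Fs = map tl (filter (lo x) Fs) @ map (Cons (inv_letter x)) (filter (\<lambda>e. \<not> sx x e) Fs) @ map tl (filter (hi x) Fs)"

definition mv_ts :: "f2_letter \<Rightarrow> trans list" where
  "mv_ts x = [(dG (encl x), fG (encl x)), (dS (encl x) (Plo x), fS (Plo x)), (dP (encl x), fP (encl x)), (dS (encl x) (Phi x), fS (Phi x))]"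

definition mvf :: "f2_letter \<Rightarrow> nat list \<Rightarrow> nat list" where
  "mvf x w = concat (map (\<lambda>T. run T w) (mv_ts x))"

lemma mvf_rep: "mvf x (rep g Fs) = rep (f2_mult_letter g x) (newFs x Fs)"
proof -
  have 1: "concat (map (oeS (encl x) (Plo x)) (map enc Fs)) = concat (map (\<lambda>e. 4 # e) (map enc (map tl (filter (lo x) Fs))))"
    using filt[of "lo x" "\<lambda>e. enc (tl e)" Fs] by (simp add: oeS_lo comp_def)
  have 2: "concat (map (oeS (encl x) (Phi x)) (map enc Fs)) = concat (map (\<lambda>e. 4 # e) (map enc (map tl (filter (hi x) Fs))))"
    using filt[of "hi x" "\<lambda>e. enc (tl e)" Fs] by (simp add: oeS_hi comp_def)
  have 3: "concat (map (oeP (encl x)) (map enc Fs)) = concat (map (\<lambda>e. 4 # e) (map enc (map (Cons (inv_letter x)) (filter (\<lambda>e. \<not> sx x e) Fs))))"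
  proof -
    have "concat (map (oeP (encl x)) (map enc Fs)) = concat (map (\<lambda>e. if \<not> sx x e then 4 # enc (inv_letter x # e) else []) Fs)"
      by (intro arg_cong[where f=concat] map_cong) (auto simp: oeP_enc)
    also have "\<dots> = concat (map (\<lambda>e. 4 # e) (map (\<lambda>e. enc (inv_letter x # e)) (filter (\<lambda>e. \<not> sx x e) Fs)))"
      by (rule filt)
    finally show ?thesis by (simp add: comp_def)
  qed
  show ?thesis
    unfolding mvf_def mv_ts_def
    using runG[of x g Fs] runS[of "encl x" "Plo x" g Fs] runS[of "encl x" "Phi x" g Fs] runP[of "encl x" g Fs] 1 2 3
    by (simp add: rep_def newFs_def)
qed

lemma enc_sx: "sx x a \<Longrightarrow> enc a = encl x # enc (tl a)"
  by (cases a) (auto simp: sx_def)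

lemma low_less: "(u = [] \<or> encl (hd u) < k) \<Longrightarrow> k \<le> b \<Longrightarrow> enc u < b # v"
  by (cases u) auto

lemma sorted_newFs:
  assumes red: "\<forall>e\<in>set Fs. red e" and srt: "sorted_wrt (<) (map enc Fs)"
  shows "sorted_wrt (<) (map enc (newFs x Fs))"
proof -
  let ?c = "encl x"
  have R: "sorted_wrt (\<lambda>a b. enc a < enc b) Fs" using srt by (simp add: sorted_wrt_map)
  have RA: "sorted_wrt (\<lambda>a b. enc a < enc b) (filter P Fs)" for P using sorted_wrt_filter[OF R] .
  have sA: "sorted_wrt (<) (map enc (map tl (filter P Fs)))" if "\<forall>e. P e \<longrightarrow> sx x e" for P
    unfolding sorted_wrt_map
  proof (rule sorted_wrt_mono_rel[OF _ RA])
    fix a b assume "a \<in> set (filter P Fs)" "b \<in> set (filter P Fs)" and ab: "enc a < enc b"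
    then have "sx x a" "sx x b" using that by auto
    then have "enc a = encl x # enc (tl a)" "enc b = encl x # enc (tl b)" by (simp_all add: enc_sx)
    then show "enc (tl a) < enc (tl b)" using ab by simp
  qed
  have sB: "sorted_wrt (<) (map enc (map (Cons (inv_letter x)) (filter (\<lambda>e. \<not> sx x e) Fs)))"
    unfolding sorted_wrt_map
    by (rule sorted_wrt_mono_rel[OF _ RA]) simp
  have AB: "enc a < enc b" if hA: "a \<in> set (map tl (filter (lo x) Fs))" and hB: "b \<in> set (map (Cons (inv_letter x)) (filter (\<lambda>e. \<not> sx x e) Fs))" for a b
  proof -
    obtain e where e: "a = tl e" "lo x e" using hA unfolding set_map set_filter by blast
    obtain f where f: "b = inv_letter x # f" using hB unfolding set_map set_filter by blast
    have "enc b = ic ?c # enc f" using f by (simp add: encl_inv)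
    moreover have "a = [] \<or> encl (hd a) < ic ?c" using e by (auto simp: lo_def)
    ultimately show ?thesis using low_less[of a "ic ?c" "ic ?c" "enc f"] by simp
  qed
  have AC: "enc a < enc b" if hA: "a \<in> set (map tl (filter (lo x) Fs))" and hB: "b \<in> set (map tl (filter (hi x) Fs))" for a b
  proof -
    obtain e where e: "a = tl e" "lo x e" using hA unfolding set_map set_filter by blast
    obtain f where f: "b = tl f" "hi x f" using hB unfolding set_map set_filter by blast
    have bne: "b \<noteq> []" using f by (simp add: hi_def)
    have "enc b = encl (hd b) # enc (tl b)" using bne by (cases b) auto
    moreover have "ic ?c < encl (hd b)" using f by (simp add: hi_def)
    moreover have "a = [] \<or> encl (hd a) < ic ?c" using e by (auto simp: lo_def)
    ultimately show ?thesis using low_less[of a "ic ?c" "encl (hd b)" "enc (tl b)"] by simp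
  qed
  have BC: "enc a < enc b" if hA: "a \<in> set (map (Cons (inv_letter x)) (filter (\<lambda>e. \<not> sx x e) Fs))" and hB: "b \<in> set (map tl (filter (hi x) Fs))" for a b
  proof -
    obtain e where e: "a = inv_letter x # e" using hA unfolding set_map set_filter by blast
    obtain f where f: "b = tl f" "hi x f" using hB unfolding set_map set_filter by blast
    have bne: "b \<noteq> []" using f by (simp add: hi_def)
    have "enc b = encl (hd b) # enc (tl b)" using bne by (cases b) auto
    moreover have "ic ?c < encl (hd b)" using f by (simp add: hi_def)
    moreover have "enc a = ic ?c # enc e" using e by (simp add: encl_inv)
    ultimately show ?thesis by simp
  qed
  have sAl: "sorted_wrt (<) (map enc (map tl (filter (lo x) Fs)))" by (rule sA) (simp add: lo_def)
  have sCl: "sorted_wrt (<) (map enc (map tl (filter (hi x) Fs)))" by (rule sA) (simp add: hi_def)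
  have AB': "\<forall>u\<in>set (map enc (map tl (filter (lo x) Fs))). \<forall>v\<in>set (map enc (map (Cons (inv_letter x)) (filter (\<lambda>e. \<not> sx x e) Fs))). u < v"
    using AB by (simp only: set_map ball_simps) blast
  have AC': "\<forall>u\<in>set (map enc (map tl (filter (lo x) Fs))). \<forall>v\<in>set (map enc (map tl (filter (hi x) Fs))). u < v"
    using AC by (simp only: set_map ball_simps) blast
  have BC': "\<forall>u\<in>set (map enc (map (Cons (inv_letter x)) (filter (\<lambda>e. \<not> sx x e) Fs))). \<forall>v\<in>set (map enc (map tl (filter (hi x) Fs))). u < v"
    using BC by (simp only: set_map ball_simps) blast
  show ?thesis
    unfolding newFs_def map_append sorted_wrt_append set_append ball_Un
    using sAl sB sCl AB' AC' BC' by blast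
qed

definition lm :: "f2_letter \<Rightarrow> f2_letter list \<Rightarrow> f2_letter list" where
  "lm x e = (if sx x e then tl e else inv_letter x # e)"

lemma sx_lo_hi: assumes "red e" "sx x e" shows "lo x e \<or> hi x e"
proof (cases "tl e")
  case Nil then show ?thesis using assms by (simp add: lo_def)
next
  case (Cons y r)
  have e: "e = x # y # r" using assms(2) Cons by (cases e) (auto simp: sx_def)
  have "y \<noteq> inv_letter x" using assms(1) e by simp
  then have "encl y \<noteq> ic (encl x)" by (metis encl_inv encl_inj)
  then show ?thesis using assms(2) e by (auto simp: lo_def hi_def)
qed

lemma set_newFs: assumes "\<forall>e\<in>set Fs. red e" shows "set (newFs x Fs) = lm x ` set Fs"
proof -
  have "set (newFs x Fs) = tl ` {e \<in> set Fs. lo x e} \<union> Cons (inv_letter x) ` {e \<in> set Fs. \<not> sx x e} \<union> tl ` {e \<in> set Fs. hi x e}"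
    by (auto simp: newFs_def)
  also have "\<dots> = tl ` {e \<in> set Fs. sx x e} \<union> Cons (inv_letter x) ` {e \<in> set Fs. \<not> sx x e}"
  proof -
    have eq: "sx x e \<longleftrightarrow> lo x e \<or> hi x e" if "red e" for e
      using sx_lo_hi[OF that] by (meson lo_def hi_def)
    have "{e \<in> set Fs. sx x e} = {e \<in> set Fs. lo x e} \<union> {e \<in> set Fs. hi x e}"
      using assms eq by blast
    then show ?thesis by auto
  qed
  also have "\<dots> = lm x ` set Fs" by (auto simp: lm_def image_iff)
  finally show ?thesis .
qed

lemma red_lm: "red e \<Longrightarrow> red (lm x e)"
  by (cases e) (auto simp: lm_def sx_def red_Cons)

lemma good_newFs: assumes "goodrep g Fs" shows "goodrep (f2_mult_letter g x) (newFs x Fs)"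
proof -
  have r: "\<forall>e\<in>set Fs. red e" "red g" "sorted_wrt (<) (map enc Fs)" using assms by (auto simp: goodrep_def)
  have "\<forall>e\<in>set (newFs x Fs). red e" using set_newFs[OF r(1)] r(1) red_lm by auto
  then show ?thesis using r sorted_newFs[OF r(1,3)] mult_letter_red by (simp add: goodrep_def)
qed

lemma lm_mult: "red g \<Longrightarrow> f2_mult (f2_mult_letter g x) (lm x e) = f2_mult g e"
proof (cases "sx x e")
  case True
  then obtain r where "e = x # r" by (cases e) (auto simp: sx_def)
  then show ?thesis using True by (simp add: lm_def f2_mult_Cons)
next
  case False
  assume "red g"
  then show ?thesis using False by (simp add: lm_def f2_mult_Cons mult_letter_cancel)
qed

lemma psi_mv: assumes "goodrep g Fs"
  shows "psi (rep (f2_mult_letter g x) (newFs x Fs)) = psi (rep g Fs) \<otimes>\<^bsub>lamp_F2\<^esub> ({}, [x])"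
proof -
  have r: "\<forall>e\<in>set Fs. red e" "red g" using assms by (auto simp: goodrep_def)
  have "f2_mult (f2_mult_letter g x) ` set (newFs x Fs) = f2_mult g ` set Fs"
    unfolding set_newFs[OF r(1)] image_image using lm_mult[OF r(2)] by simp
  moreover have "f2_mult g [x] = f2_mult_letter g x" by (simp add: f2_mult_def)
  ultimately show ?thesis by (simp add: psi_rep lamp_F2_def)
qed

lemma sorted_hd_min: "sorted_wrt (<) (map enc Fs) \<Longrightarrow> [] \<in> set Fs \<Longrightarrow> hd Fs = []"
proof (cases Fs)
  case (Cons e Fs')
  assume s: "sorted_wrt (<) (map enc Fs)" and m: "[] \<in> set Fs"
  show ?thesis
  proof (rule ccontr)
    assume "hd Fs \<noteq> []"
    then have "e \<noteq> []" "[] \<in> set Fs'" using Cons m by auto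
    then have "enc e < enc []" using s Cons by auto
    then show False by simp
  qed
qed simp

lemma togl_props: assumes "goodrep g Fs"
  shows "goodrep g (togl Fs)" "set (togl Fs) = (set Fs - {[]}) \<union> ({[]} - set Fs)"
proof -
  have r: "\<forall>e\<in>set Fs. red e" "red g" "sorted_wrt (<) (map enc Fs)" using assms by (auto simp: goodrep_def)
  show "set (togl Fs) = (set Fs - {[]}) \<union> ({[]} - set Fs)"
  proof (cases "Fs \<noteq> [] \<and> hd Fs = []")
    case True
    then obtain Fs' where F: "Fs = [] # Fs'" by (cases Fs) auto
    have "[] \<notin> set Fs'" using r(3) F by auto
    then show ?thesis using F by (auto simp: togl_def)
  next
    case False
    then have "[] \<notin> set Fs" using sorted_hd_min[OF r(3)] by auto
    then show ?thesis using False by (auto simp: togl_def)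
  qed
  show "goodrep g (togl Fs)"
  proof (cases "Fs \<noteq> [] \<and> hd Fs = []")
    case True
    then obtain Fs' where F: "Fs = [] # Fs'" by (cases Fs) auto
    then show ?thesis using r by (simp add: togl_def goodrep_def)
  next
    case False
    then have n: "[] \<notin> set Fs" using sorted_hd_min[OF r(3)] by auto
    have "\<forall>e\<in>set Fs. [] < enc e"
    proof
      fix e assume "e \<in> set Fs"
      then have "e \<noteq> []" using n by auto
      then show "[] < enc e" by (cases e) auto
    qed
    moreover have "togl Fs = [] # Fs" using False unfolding togl_def by presburger
    ultimately show ?thesis using r by (simp add: goodrep_def red_Cons)
  qed
qed

lemma psi_tg: assumes "goodrep g Fs"
  shows "psi (rep g (togl Fs)) = psi (rep g Fs) \<otimes>\<^bsub>lamp_F2\<^esub> ({[]}, [])"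
proof -
  have r: "\<forall>e\<in>set Fs. red e" "red g" using assms by (auto simp: goodrep_def)
  have inj: "inj_on (f2_mult g) {w. red w}" by (rule transl_inj[OF r(2)])
  have sub: "set Fs \<subseteq> {w. red w}" "{[]} \<subseteq> {w. red w}" using r by auto
  have "f2_mult g ` set (togl Fs) = (f2_mult g ` set Fs - {g}) \<union> ({g} - f2_mult g ` set Fs)"
  proof -
    have e1: "f2_mult g ` (set Fs - {[]}) = f2_mult g ` set Fs - f2_mult g ` {[]}"
      by (rule inj_on_image_set_diff[OF inj]) (use sub in auto)
    have e2: "f2_mult g ` ({[]} - set Fs) = f2_mult g ` {[]} - f2_mult g ` set Fs"
      by (rule inj_on_image_set_diff[OF inj]) (use sub in auto)
    show ?thesis unfolding togl_props(2)[OF assms] image_Un e1 e2 by simp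
  qed
  then show ?thesis by (simp add: psi_rep lamp_F2_def)
qed

lemma lin_mv: "lin_time_computable 2 {..4} (mvf x)"
proof -
  let ?c = "encl x"
  have c: "?c < 4" "ic ?c < 4" by (simp_all add: ic_lt)
  have tr: "\<forall>T\<in>set (mv_ts x). \<forall>q<6. \<forall>a\<in>{..4::nat}. fst (fst T q a) < 6 \<and> set (snd (fst T q a)) \<subseteq> {..4} \<and> length (snd (fst T q a)) \<le> 3"
  proof -
    have G: "fst (dG ?c q a) < 6 \<and> set (snd (dG ?c q a)) \<subseteq> {..4} \<and> length (snd (dG ?c q a)) \<le> 3" if "q < 6" "a \<le> 4" for q a
      using that c by (auto simp: dG_def gend_def)
    have S: "fst (dS ?c P q a) < 6 \<and> set (snd (dS ?c P q a)) \<subseteq> {..4} \<and> length (snd (dS ?c P q a)) \<le> 3" if "q < 6" "a \<le> 4" for q a P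
      using that c by (auto simp: dS_def fS_def)
    have Pp: "fst (dP ?c q a) < 6 \<and> set (snd (dP ?c q a)) \<subseteq> {..4} \<and> length (snd (dP ?c q a)) \<le> 3" if "q < 6" "a \<le> 4" for q a
      using that c by (auto simp: dP_def fP_def)
    show ?thesis unfolding mv_ts_def using G S Pp by auto
  qed
  have fn: "\<forall>T\<in>set (mv_ts x). \<forall>q<6. set (snd T q) \<subseteq> {..4} \<and> length (snd T q) \<le> 3"
    unfolding mv_ts_def using c by (auto simp: fG_def gend_def fS_def fP_def)
  have "lin_time_computable 2 {..4} (\<lambda>w. concat (map (\<lambda>T. run T w) (mv_ts x)))"
    by (rule gen_lin[where ts="mv_ts x" and S="{..4}" and N=6 and K=3, OF _ _ _ tr fn]) (simp_all add: mv_ts_def)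
  moreover have "mvf x = (\<lambda>w. concat (map (\<lambda>T. run T w) (mv_ts x)))" by (simp add: mvf_def fun_eq_iff)
  ultimately show ?thesis by simp
qed

definition tgf :: "nat list \<Rightarrow> nat list" where
  "tgf w = concat (map (\<lambda>T. run T w) [(dT, fT)])"

lemma lin_tg: "lin_time_computable 2 {..4} tgf"
proof -
  have tr: "\<forall>T\<in>set [(dT, fT)]. \<forall>q<6. \<forall>a\<in>{..4::nat}. fst (fst T q a) < 6 \<and> set (snd (fst T q a)) \<subseteq> {..4} \<and> length (snd (fst T q a)) \<le> 3"
    by (auto simp: dT_def)
  have fn: "\<forall>T\<in>set [(dT, fT)]. \<forall>q<6. set (snd T q) \<subseteq> {..4} \<and> length (snd T q) \<le> 3"
    by (auto simp: fT_def)
  have "lin_time_computable 2 {..4} (\<lambda>w. concat (map (\<lambda>T. run T w) [(dT, fT)]))"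
    by (rule gen_lin[where ts="[(dT, fT)]" and S="{..4}" and N=6 and K=3, OF _ _ _ tr fn]) simp_all
  moreover have "tgf = (\<lambda>w. concat (map (\<lambda>T. run T w) [(dT, fT)]))" by (simp add: tgf_def fun_eq_iff)
  ultimately show ?thesis by simp
qed

lemma tgf_rep: "tgf (rep g Fs) = rep g (togl Fs)"
  by (simp add: tgf_def runT)

definition fgen :: "f2_letter list set \<times> f2_letter list \<Rightarrow> nat list \<Rightarrow> nat list" where
  "fgen s = (case snd s of [x] \<Rightarrow> mvf x | _ \<Rightarrow> tgf)"

theorem theorem3p5:
  shows "cayley_lin_computable 2 lamp_F2 lamp_F2_gens"
  unfolding cayley_lin_computable_def
proof (intro exI conjI)
  show "finite {..4::nat}" by simp
  show "Lset \<subseteq> lists {..4}" using rep_in_lists by (auto simp: Lset_def)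
  show "bij_betw psi Lset (carrier lamp_F2)" by (rule bij_psi)
  show "\<forall>s\<in>lamp_F2_gens. lin_time_computable 2 {..4} (fgen s) \<and> (\<forall>w\<in>Lset. fgen s w \<in> Lset \<and> psi (fgen s w) = psi w \<otimes>\<^bsub>lamp_F2\<^esub> s)"
  proof
    fix s assume "s \<in> lamp_F2_gens"
    then consider (mv) x where "s = ({}, [x])" | (tg) "s = ({[]}, [])" by (auto simp: lamp_F2_gens_def)
    then show "lin_time_computable 2 {..4} (fgen s) \<and> (\<forall>w\<in>Lset. fgen s w \<in> Lset \<and> psi (fgen s w) = psi w \<otimes>\<^bsub>lamp_F2\<^esub> s)"
    proof cases
      case mv
      have f: "fgen s = mvf x" using mv by (simp add: fgen_def)
      show ?thesis unfolding f
      proof (intro conjI ballI)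
        show "lin_time_computable 2 {..4} (mvf x)" by (rule lin_mv)
      next
        fix w assume "w \<in> Lset"
        then obtain g Fs where w: "w = rep g Fs" "goodrep g Fs" by (auto simp: Lset_def)
        show "mvf x w \<in> Lset" using good_newFs[OF w(2), of x] unfolding Lset_def w(1) mvf_rep by blast
        show "psi (mvf x w) = psi w \<otimes>\<^bsub>lamp_F2\<^esub> s" using w psi_mv[OF w(2)] mv by (simp add: mvf_rep)
      qed
    next
      case tg
      have f: "fgen s = tgf" using tg by (simp add: fgen_def)
      show ?thesis unfolding f
      proof (intro conjI ballI)
        show "lin_time_computable 2 {..4} tgf" by (rule lin_tg)
      next
        fix w assume "w \<in> Lset"
        then obtain g Fs where w: "w = rep g Fs" "goodrep g Fs" by (auto simp: Lset_def)
        show "tgf w \<in> Lset" using togl_props(1)[OF w(2)] unfolding Lset_def w(1) tgf_rep by blast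
        show "psi (tgf w) = psi w \<otimes>\<^bsub>lamp_F2\<^esub> s" using w psi_tg[OF w(2)] tg by (simp add: tgf_rep)
      qed
    qed
  qed
qed

end
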